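(* Let $R$ be a pmp equivalence relation, $F\subseteq\llbracket R\rrbracket$ finite, $n,d\geq1$, $\delta>0$ and $\varphi\in{\rm SA}(F,4n,\delta,d)$. Let $s\in\mathbf\Sigma F_\pm^n$ and let $s=\sum_{i=1}^k s_i$ with $s_1,\dots,s_k\in\mathbf\Sigma F_\pm^n$ pairwise orthogonal. Then \[ \Big|\varphi(s)-\sum_{i=1}^k\varphi(s_i)\pi_i(\varphi(s_1),\dots,\varphi(s_k))\Big|<150(2|F|+1)^{2n}\delta. \]
   Context: Let $(X,\mu)$ be a standard probability space and $R$ a pmp countable Borel equivalence relation. $\llbracket R\rrbracket$ denotes the set of partial measure-preserving Borel bijections $s:\operatorname{dom}s\to\operatorname{ran}s$ between Borel subsets of $X$ with graph contained in $R$, modulo null sets; product $(st)(x)=s(t(x))$ on $t^{-1}(\operatorname{ran}t\cap\operatorname{dom}s)$, inverse $s^{-1}$, identity $1$. A projection is the identity map $1_A$ of a Borel set $A$, and $1-1_A:=1_{X\setminus A}$. Pairwise orthogonal elements (pairwise disjoint domains and ranges) have a sum equal to $s_i$ on $\operatorname{dom}s_i$; $\mathbf\Sigma F$ is the set of finite sums of pairwise orthogonal elements of $F$; $F_\pm=F\cup\{s^{-1}:s\in F\}\cup\{1\}$; $F_\pm^n$ the products of $n$ elements of $F_\pm$. $|s-t|=\mu\{x\in\operatorname{dom}s\cup\operatorname{dom}t:s(x)\neq t(x)\}$ (with $s(x)\neq t(x)$ on $\operatorname{dom}s\triangle\operatorname{dom}t$), $\tau(s)=\mu\{x\in\operatorname{dom}s:s(x)=x\}$.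 $\llbracket d\rrbracket$: partial permutations of $\{1,\dots,d\}$ with uniform probability measure, same structure, trace $\operatorname{tr}$. ${\rm SA}(F,n,\delta,d)$ is the set of maps $\varphi:\llbracket R\rrbracket\to\llbracket d\rrbracket$ with $\varphi(1)=1$ such that $|\varphi(st)-\varphi(s)\varphi(t)|<\delta$ for all $s,t\in\mathbf\Sigma F_\pm^n$ with $st\in\mathbf\Sigma F_\pm^n$, and $|\operatorname{tr}(\varphi(s))-\tau(s)|<\delta$ for all $s\in\mathbf\Sigma F_\pm^n$. For $t_1,\dots,t_k\in\llbracket d\rrbracket$, $\pi_i(t_1,\dots,t_k)=\big(t_i^{-1}t_i\prod_{j\neq i}(1-t_j^{-1}t_j)\big)\,t_i^{-1}\big(t_it_i^{-1}\prod_{j\neq i}(1-t_jt_j^{-1})\big)t_i$; the elements $t_i\pi_i(t_1,\dots,t_k)$ are pairwise orthogonal, so their sum is defined. *)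

theory Defs
  imports "HOL-Probability.Probability"
begin

text \<open>Partial bijections are represented as partial maps of type 'b \<rightharpoonup> 'b.
 Product (s t)(x) = s(t(x)) is map_comp s t.\<close>

definition pinv :: "('b \<rightharpoonup> 'b) \<Rightarrow> ('b \<rightharpoonup> 'b)" where
  "pinv s = (\<lambda>y. if y \<in> ran s then Some (THE x. s x = Some y) else None)"

definition psum :: "('b \<rightharpoonup> 'b) list \<Rightarrow> ('b \<rightharpoonup> 'b)" where
  "psum ts = foldr (\<lambda>t acc. t ++ acc) ts Map.empty"

definition pprod :: "('b \<rightharpoonup> 'b) \<Rightarrow> ('b \<rightharpoonup> 'b) list \<Rightarrow> ('b \<rightharpoonup> 'b)" where
  "pprod one ts = foldr (\<lambda>t acc. map_comp t acc) ts one"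

definition pone :: "'a \<rightharpoonup> 'a" where "pone = Some"

definition partial_borel_bij :: "'a measure \<Rightarrow> ('a \<times> 'a) set \<Rightarrow> ('a \<rightharpoonup> 'a) \<Rightarrow> bool" where
  "partial_borel_bij M R s \<longleftrightarrow>
     dom s \<in> sets M \<and> ran s \<in> sets M \<and> inj_on s (dom s) \<and>
     (\<forall>x y. s x = Some y \<longrightarrow> (x, y) \<in> R) \<and>
     (the \<circ> s) \<in> measurable (restrict_space M (dom s)) M \<and>
     (the \<circ> pinv s) \<in> measurable (restrict_space M (ran s)) M"

definition meas_pres :: "'a measure \<Rightarrow> ('a \<rightharpoonup> 'a) \<Rightarrow> bool" where
  "meas_pres M s \<longleftrightarrow>
     (\<forall>B\<in>sets M. B \<subseteq> ran s \<longrightarrow> emeasure M (dom s \<inter> (the \<circ> s) -` B) = emeasure M B)"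

definition std_prob_space :: "'a::polish_space measure \<Rightarrow> bool" where
  "std_prob_space M \<longleftrightarrow> prob_space M \<and> sets M = sets borel"

definition pmp_cber :: "'a measure \<Rightarrow> ('a \<times> 'a) set \<Rightarrow> bool" where
  "pmp_cber M R \<longleftrightarrow> equiv UNIV R \<and> R \<in> sets (M \<Otimes>\<^sub>M M) \<and>
     (\<forall>x. countable (R `` {x})) \<and>
     (\<forall>s. partial_borel_bij M R s \<longrightarrow> meas_pres M s)"

text \<open>Representatives of elements of the full pseudogroup [[R]]; elements of [[R]]
 are classes of representatives modulo the relation peq (equality almost everywhere).\<close>
definition pelem :: "'a measure \<Rightarrow> ('a \<times> 'a) set \<Rightarrow> ('a \<rightharpoonup> 'a) \<Rightarrow> bool" where
  "pelem M R s \<longleftrightarrow> partial_borel_bij M R s \<and> meas_pres M s"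

definition peq :: "'a measure \<Rightarrow> ('a \<rightharpoonup> 'a) \<Rightarrow> ('a \<rightharpoonup> 'a) \<Rightarrow> bool" where
  "peq M s t \<longleftrightarrow> (AE x in M. s x = t x)"

definition pdist :: "'a measure \<Rightarrow> ('a \<rightharpoonup> 'a) \<Rightarrow> ('a \<rightharpoonup> 'a) \<Rightarrow> real" where
  "pdist M s t = measure M {x. s x \<noteq> t x}"

definition ptau :: "'a measure \<Rightarrow> ('a \<rightharpoonup> 'a) \<Rightarrow> real" where
  "ptau M s = measure M {x. s x = Some x}"

definition orth :: "'a measure \<Rightarrow> ('a \<rightharpoonup> 'a) \<Rightarrow> ('a \<rightharpoonup> 'a) \<Rightarrow> bool" where
  "orth M s t \<longleftrightarrow> dom s \<inter> dom t \<in> null_sets M \<and> ran s \<inter> ran t \<in> null_sets M"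

definition pw_orth :: "'a measure \<Rightarrow> ('a \<rightharpoonup> 'a) list \<Rightarrow> bool" where
  "pw_orth M ts \<longleftrightarrow> (\<forall>i<length ts. \<forall>j<length ts. i \<noteq> j \<longrightarrow> orth M (ts ! i) (ts ! j))"

definition SigmaP :: "'a measure \<Rightarrow> ('a \<times> 'a) set \<Rightarrow> ('a \<rightharpoonup> 'a) set \<Rightarrow> ('a \<rightharpoonup> 'a) set" where
  "SigmaP M R G = {s. pelem M R s \<and>
     (\<exists>ts. set ts \<subseteq> G \<and> pw_orth M ts \<and> peq M s (psum ts))}"

definition Fpm :: "('a \<rightharpoonup> 'a) set \<Rightarrow> ('a \<rightharpoonup> 'a) set" where
  "Fpm F = F \<union> pinv ` F \<union> {pone}"

definition ppow :: "('a \<rightharpoonup> 'a) set \<Rightarrow> nat \<Rightarrow> ('a \<rightharpoonup> 'a) set" where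
  "ppow G n = {pprod pone us | us. length us = n \<and> set us \<subseteq> G}"

definition pperm :: "nat \<Rightarrow> (nat \<rightharpoonup> nat) \<Rightarrow> bool" where
  "pperm d t \<longleftrightarrow> inj_on t (dom t) \<and> dom t \<subseteq> {1..d} \<and> ran t \<subseteq> {1..d}"

definition dOne :: "nat \<Rightarrow> (nat \<rightharpoonup> nat)" where
  "dOne d = (\<lambda>x. if x \<in> {1..d} then Some x else None)"

definition dcompl :: "nat \<Rightarrow> (nat \<rightharpoonup> nat) \<Rightarrow> (nat \<rightharpoonup> nat)" where
  "dcompl d p = (\<lambda>x. if x \<in> {1..d} \<and> p x = None then Some x else None)"

definition ddist :: "nat \<Rightarrow> (nat \<rightharpoonup> nat) \<Rightarrow> (nat \<rightharpoonup> nat) \<Rightarrow> real" where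
  "ddist d a b = real (card {x\<in>{1..d}. a x \<noteq> b x}) / real d"

definition dtr :: "nat \<Rightarrow> (nat \<rightharpoonup> nat) \<Rightarrow> real" where
  "dtr d a = real (card {x\<in>{1..d}. a x = Some x}) / real d"

text \<open>pi_i(t_1,...,t_k), with 0-based index i < k = length ts.\<close>
definition dpi :: "nat \<Rightarrow> (nat \<rightharpoonup> nat) list \<Rightarrow> nat \<Rightarrow> (nat \<rightharpoonup> nat)" where
  "dpi d ts i =
    (let others = filter (\<lambda>j. j \<noteq> i) [0..<length ts];
         L = map_comp (map_comp (pinv (ts ! i)) (ts ! i))
               (pprod (dOne d) (map (\<lambda>j. dcompl d (map_comp (pinv (ts ! j)) (ts ! j))) others));
         Rt = map_comp (map_comp (ts ! i) (pinv (ts ! i)))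
               (pprod (dOne d) (map (\<lambda>j. dcompl d (map_comp (ts ! j) (pinv (ts ! j)))) others))
     in map_comp L (map_comp (pinv (ts ! i)) (map_comp Rt (ts ! i))))"

text \<open>phi is a map on [[R]]: it is given on representatives and must respect peq.\<close>
definition SA :: "'a measure \<Rightarrow> ('a \<times> 'a) set \<Rightarrow> ('a \<rightharpoonup> 'a) set \<Rightarrow> nat \<Rightarrow> real \<Rightarrow> nat
     \<Rightarrow> (('a \<rightharpoonup> 'a) \<Rightarrow> (nat \<rightharpoonup> nat)) set" where
  "SA M R F n \<delta> d = {\<phi>.
     (\<forall>s. pelem M R s \<longrightarrow> pperm d (\<phi> s)) \<and>
     (\<forall>s t. pelem M R s \<longrightarrow> pelem M R t \<longrightarrow> peq M s t \<longrightarrow> \<phi> s = \<phi> t) \<and>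
     \<phi> pone = dOne d \<and>
     (\<forall>s\<in>SigmaP M R (ppow (Fpm F) n). \<forall>t\<in>SigmaP M R (ppow (Fpm F) n).
        map_comp s t \<in> SigmaP M R (ppow (Fpm F) n) \<longrightarrow>
        ddist d (\<phi> (map_comp s t)) (map_comp (\<phi> s) (\<phi> t)) < \<delta>) \<and>
     (\<forall>s\<in>SigmaP M R (ppow (Fpm F) n). \<bar>dtr d (\<phi> s) - ptau M s\<bar> < \<delta>)}"

end

theory Submission
  imports Defs
begin

lemma inj_dom: "inj_on t (dom t) \<Longrightarrow> t x = Some y \<Longrightarrow> t x' = Some y \<Longrightarrow> x = x'"
  by (metis domI inj_onD)

lemma pinv_Some:
  assumes "inj_on t (dom t)" shows "pinv t y = Some x \<longleftrightarrow> t x = Some y"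
proof
  assume h: "t x = Some y"
  hence "y \<in> ran t" by (auto simp: ran_def)
  moreover have "(THE x. t x = Some y) = x"
    by (rule the_equality) (use h in simp, use h assms inj_dom in metis)
  ultimately show "pinv t y = Some x" by (simp add: pinv_def)
next
  assume h: "pinv t y = Some x"
  hence "y \<in> ran t" by (auto simp: pinv_def split: if_splits)
  then obtain x0 where x0: "t x0 = Some y" by (auto simp: ran_def)
  have "(THE x. t x = Some y) = x0"
    by (rule the_equality) (use x0 in simp, use x0 assms inj_dom in metis)
  with h `y \<in> ran t` x0 show "t x = Some y" by (simp add: pinv_def)
qed

lemma pinv_None: "pinv t y = None \<longleftrightarrow> y \<notin> ran t"
  by (simp add: pinv_def)

lemma comp_pinv_self:
  assumes "inj_on t (dom t)" shows "(t \<circ>\<^sub>m pinv t) y = (if y \<in> ran t then Some y else None)"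
proof (cases "pinv t y")
  case None thus ?thesis by (simp add: pinv_None)
next
  case (Some x)
  hence "t x = Some y" using pinv_Some[OF assms] by simp
  thus ?thesis using Some by (auto simp: ran_def)
qed

lemma pinv_comp_self:
  assumes "inj_on t (dom t)" shows "(pinv t \<circ>\<^sub>m t) x = (if x \<in> dom t then Some x else None)"
  using pinv_Some[OF assms, of "the (t x)" x] by (cases "t x") auto

lemma dcompl_val: "dcompl d p y = (if y \<in> {1..d} \<and> p y = None then Some y else None)"
  by (simp add: dcompl_def)

lemma pprod_proj:
  "pprod (dOne d) (map (\<lambda>j. dcompl d (h j)) js) y =
    (if y \<in> {1..d} \<and> (\<forall>j\<in>set js. h j y = None) then Some y else None)"
  by (induction js) (auto simp: pprod_def dOne_def dcompl_def map_comp_def split: option.splits)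

lemma pperm_inj: "pperm d t \<Longrightarrow> inj_on t (dom t)" by (simp add: pperm_def)

lemma dpi_char:
  assumes pp: "\<forall>j<length ts. pperm d (ts!j)" and i: "i < length ts"
  shows "(ts!i \<circ>\<^sub>m dpi d ts i) x =
    (if x \<in> dom (ts!i) \<and> (\<forall>j<length ts. j \<noteq> i \<longrightarrow> x \<notin> dom (ts!j) \<and> the ((ts!i) x) \<notin> ran (ts!j))
     then (ts!i) x else None)"
proof -
  have inj: "\<And>j. j < length ts \<Longrightarrow> inj_on (ts!j) (dom (ts!j))" using pp pperm_inj by blast
  have sub: "dom (ts!i) \<subseteq> {1..d}" "ran (ts!i) \<subseteq> {1..d}" using pp i by (auto simp: pperm_def)
  have so: "set (filter (\<lambda>j. j \<noteq> i) [0..<length ts]) = {j. j < length ts \<and> j \<noteq> i}" by auto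
  show ?thesis
  proof (cases "(ts!i) x")
    case None thus ?thesis by (simp add: dpi_def Let_def map_comp_def)
  next
    case (Some y)
    have y: "y \<in> ran (ts!i)" using Some by (auto simp: ran_def)
    have x: "x \<in> dom (ts!i)" using Some by auto
    have pv: "pinv (ts!i) y = Some x" using pinv_Some[OF inj[OF i]] Some by simp
    have yd: "y \<in> {1..d}" and xd: "x \<in> {1..d}" using sub y x by auto
    have A: "\<And>j. j < length ts \<Longrightarrow> (ts!j \<circ>\<^sub>m pinv (ts!j)) y = None \<longleftrightarrow> y \<notin> ran (ts!j)"
      using comp_pinv_self[OF inj] by simp
    have B: "\<And>j. j < length ts \<Longrightarrow> (pinv (ts!j) \<circ>\<^sub>m ts!j) x = None \<longleftrightarrow> x \<notin> dom (ts!j)"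
      using pinv_comp_self[OF inj] by simp
    show ?thesis
      using Some pv yd xd A B y x comp_pinv_self[OF inj[OF i], of y] pinv_comp_self[OF inj[OF i], of x]
      by (auto simp: dpi_def Let_def map_comp_def pprod_proj so split: option.splits)
  qed
qed

lemma psum_Cons: "psum (t # ts) = t ++ psum ts" by (simp add: psum_def)

lemma psum_None: "psum ts x = None \<longleftrightarrow> (\<forall>t\<in>set ts. t x = None)"
  by (induction ts) (auto simp: psum_def)

lemma psum_Some: "psum ts x = Some y \<Longrightarrow> \<exists>t\<in>set ts. t x = Some y"
  by (induction ts) (auto simp: psum_def map_add_Some_iff)

lemma psum_unique:
  "i < length ts \<Longrightarrow> (\<forall>j<length ts. j \<noteq> i \<longrightarrow> (ts!j) x = None) \<Longrightarrow> psum ts x = (ts!i) x"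
proof (induction ts arbitrary: i)
  case Nil thus ?case by simp
next
  case (Cons t ts)
  show ?case
  proof (cases i)
    case 0
    have "\<forall>u\<in>set ts. u x = None"
    proof
      fix u assume "u \<in> set ts"
      then obtain k where "k < length ts" "u = ts!k" by (auto simp: in_set_conv_nth)
      thus "u x = None" using Cons.prems(2)[rule_format, of "Suc k"] 0 by simp
    qed
    hence "psum ts x = None" by (simp add: psum_None)
    thus ?thesis using 0 by (simp add: psum_Cons map_add_def)
  next
    case (Suc i')
    have "t x = None" using Cons.prems Suc by force
    moreover have "psum ts x = (ts!i') x" using Cons.prems Suc by (intro Cons.IH) auto
    ultimately show ?thesis using Suc by (simp add: psum_Cons map_add_def split: option.splits)
  qed
qed

definition bad :: "nat \<Rightarrow> (nat \<rightharpoonup> nat) \<Rightarrow> (nat \<rightharpoonup> nat) \<Rightarrow> nat set" where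
  "bad d a b = {x\<in>{1..d}. a x \<noteq> b x}"
definition fixs :: "nat \<Rightarrow> (nat \<rightharpoonup> nat) \<Rightarrow> nat set" where
  "fixs d a = {x\<in>{1..d}. a x = Some x}"

lemma finite_bad[simp]: "finite (bad d a b)" unfolding bad_def by (rule finite_subset[of _ "{1..d}"]) auto
lemma finite_fixs[simp]: "finite (fixs d a)" unfolding fixs_def by (rule finite_subset[of _ "{1..d}"]) auto

lemma bad_iff: "x \<in> bad d a b \<longleftrightarrow> x \<in> {1..d} \<and> a x \<noteq> b x" by (simp add: bad_def)
lemma fixs_iff: "x \<in> fixs d a \<longleftrightarrow> x \<in> {1..d} \<and> a x = Some x" by (simp add: fixs_def)

lemma pperm_dom: "pperm d g \<Longrightarrow> dom g \<subseteq> {1..d}" by (simp add: pperm_def)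
lemma pperm_ran: "pperm d g \<Longrightarrow> ran g \<subseteq> {1..d}" by (simp add: pperm_def)
lemma finite_dom_pp: "pperm d g \<Longrightarrow> finite (dom g)" by (rule finite_subset[OF pperm_dom]) auto
lemma finite_ran_pp: "pperm d g \<Longrightarrow> finite (ran g)" by (rule finite_subset[OF pperm_ran]) auto

lemma ran_img: "ran g = (\<lambda>x. the (g x)) ` dom g"
proof
  show "ran g \<subseteq> (\<lambda>x. the (g x)) ` dom g"
  proof
    fix y assume "y \<in> ran g"
    then obtain x where "g x = Some y" by (auto simp: ran_def)
    thus "y \<in> (\<lambda>x. the (g x)) ` dom g" by (intro image_eqI[of _ _ x]) auto
  qed
  show "(\<lambda>x. the (g x)) ` dom g \<subseteq> ran g" by (auto simp: ran_def)
qed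

lemma card_ran_le: "pperm d g \<Longrightarrow> card (ran g) \<le> card (dom g)"
proof -
  assume a: "pperm d g"
  have "card (ran g) = card ((\<lambda>x. the (g x)) ` dom g)" by (simp only: ran_img)
  also have "\<dots> \<le> card (dom g)" by (rule card_image_le[OF finite_dom_pp[OF a]])
  finally show ?thesis .
qed

lemma domfix: assumes "pperm d g" shows "dom g \<subseteq> fixs d g \<union> bad d g (g \<circ>\<^sub>m g)"
proof
  fix x assume x: "x \<in> dom g"
  then obtain y where y: "g x = Some y" by auto
  have xd: "x \<in> {1..d}" using x pperm_dom[OF assms] by auto
  show "x \<in> fixs d g \<union> bad d g (g \<circ>\<^sub>m g)"
  proof (cases "y = x")
    case True
    have "g x = Some x" using y True by simp
    thus ?thesis using xd fixs_iff by blast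
  next
    case False
    have "g y \<noteq> Some y" using inj_dom[OF pperm_inj[OF assms] y] False by metis
    hence "g x \<noteq> (g \<circ>\<^sub>m g) x" using y by simp
    thus ?thesis using xd bad_iff by blast
  qed
qed

lemma fix_from_comp:
  assumes "pperm d g" "x \<in> dom g" "x \<notin> bad d g (g \<circ>\<^sub>m h)" shows "x \<in> fixs d h"
proof -
  obtain y where y: "g x = Some y" using assms(2) by auto
  have xd: "x \<in> {1..d}" using assms(2) pperm_dom[OF assms(1)] by auto
  hence "(g \<circ>\<^sub>m h) x = Some y" using assms(3) y bad_iff by metis
  then obtain x' where "h x = Some x'" "g x' = Some y" by (cases "h x") auto
  with inj_dom[OF pperm_inj[OF assms(1)] y] have "h x = Some x" by metis
  thus ?thesis using xd fixs_iff by blast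
qed

lemma fixfix: "fixs d g \<inter> fixs d h \<subseteq> bad d (g \<circ>\<^sub>m h) z \<union> dom z"
proof
  fix x assume "x \<in> fixs d g \<inter> fixs d h"
  hence x: "x \<in> {1..d}" "g x = Some x" "h x = Some x" using fixs_iff by auto
  hence "(g \<circ>\<^sub>m h) x = Some x" by simp
  thus "x \<in> bad d (g \<circ>\<^sub>m h) z \<union> dom z" using x(1) bad_iff by (cases "z x") auto
qed

lemma card_UN_real:
  assumes "finite I" "\<forall>i\<in>I. real (card (S i)) \<le> r"
  shows "real (card (\<Union>i\<in>I. S i)) \<le> real (card I) * r"
proof -
  have "card (\<Union>i\<in>I. S i) \<le> (\<Sum>i\<in>I. card (S i))" using card_UN_le[OF assms(1)] by blast
  hence "real (card (\<Union>i\<in>I. S i)) \<le> real (\<Sum>i\<in>I. card (S i))" by (simp only: of_nat_le_iff)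
  hence "real (card (\<Union>i\<in>I. S i)) \<le> (\<Sum>i\<in>I. real (card (S i)))" by simp
  also have "\<dots> \<le> real (card I) * r" using sum_bounded_above[of I "\<lambda>i. real (card (S i))" r] assms(2) by simp
  finally show ?thesis .
qed

lemma card_Un_real: "finite A \<Longrightarrow> finite B \<Longrightarrow> real (card (A \<union> B)) \<le> real (card A) + real (card B)"
  using card_Un_le[of A B] by linarith

lemma card_mono_real: "finite B \<Longrightarrow> A \<subseteq> B \<Longrightarrow> real (card A) \<le> real (card B)"
  by (simp add: card_mono)

lemma arith1: "(q::nat) \<le> u + x \<Longrightarrow> p + u = w + v \<Longrightarrow> v \<le> y \<Longrightarrow> p + q \<le> w + (y + x)" by linarith

lemma bonf_aux:
  assumes J: "finite J" and fA: "\<forall>i\<in>J. finite (A i)"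
  shows "finite I \<Longrightarrow> I \<subseteq> J \<Longrightarrow> (\<Sum>i\<in>I. card (A i)) \<le> card (\<Union>i\<in>I. A i) + (\<Sum>i\<in>I. \<Sum>j\<in>J-{i}. card (A i \<inter> A j))"
proof (induction I rule: finite_induct)
  case empty thus ?case by simp
next
  case (insert a I)
  have fI: "finite I" and aI: "a \<notin> I" and sub: "insert a I \<subseteq> J" using insert.hyps insert.prems by auto
  have IH: "(\<Sum>i\<in>I. card (A i)) \<le> card (\<Union>i\<in>I. A i) + (\<Sum>i\<in>I. \<Sum>j\<in>J-{i}. card (A i \<inter> A j))"
    using insert.IH sub by blast
  let ?U = "\<Union>i\<in>I. A i"
  have fU: "finite ?U" by (rule finite_UN_I[OF fI]) (use sub fA in blast)
  have fa: "finite (A a)" using sub fA by blast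
  have e1: "card (A a) + card ?U = card (A a \<union> ?U) + card (A a \<inter> ?U)"
    using card_Un_Int[OF fa fU] .
  have eq: "A a \<inter> ?U = (\<Union>j\<in>I. A a \<inter> A j)" by blast
  have "card (A a \<inter> ?U) \<le> (\<Sum>j\<in>I. card (A a \<inter> A j))" unfolding eq by (rule card_UN_le[OF fI])
  also have "\<dots> \<le> (\<Sum>j\<in>J-{a}. card (A a \<inter> A j))"
  proof (rule sum_mono2)
    show "finite (J - {a})" using J by (rule finite_Diff)
    show "I \<subseteq> J - {a}" using sub aI by blast
  qed auto
  finally have e2: "card (A a \<inter> ?U) \<le> (\<Sum>j\<in>J-{a}. card (A a \<inter> A j))" .
  have s1: "(\<Sum>i\<in>insert a I. card (A i)) = card (A a) + (\<Sum>i\<in>I. card (A i))" using fI aI by (rule sum.insert)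
  have s2: "(\<Sum>i\<in>insert a I. \<Sum>j\<in>J-{i}. card (A i \<inter> A j)) = (\<Sum>j\<in>J-{a}. card (A a \<inter> A j)) + (\<Sum>i\<in>I. \<Sum>j\<in>J-{i}. card (A i \<inter> A j))"
    using fI aI by (rule sum.insert)
  have s3: "(\<Union>i\<in>insert a I. A i) = A a \<union> ?U" by blast
  show ?case unfolding s1 s2 s3 by (rule arith1[OF IH e1 e2])
qed

lemma bonf:
  assumes "finite I" "\<forall>i\<in>I. finite (A i)"
  shows "(\<Sum>i\<in>I. real (card (A i))) \<le> real (card (\<Union>i\<in>I. A i)) + (\<Sum>i\<in>I. \<Sum>j\<in>I-{i}. real (card (A i \<inter> A j)))"
proof -
  have "(\<Sum>i\<in>I. card (A i)) \<le> card (\<Union>i\<in>I. A i) + (\<Sum>i\<in>I. \<Sum>j\<in>I-{i}. card (A i \<inter> A j))"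
    using bonf_aux[OF assms assms(1)] by simp
  hence "real (\<Sum>i\<in>I. card (A i)) \<le> real (card (\<Union>i\<in>I. A i) + (\<Sum>i\<in>I. \<Sum>j\<in>I-{i}. card (A i \<inter> A j)))"
    by (rule of_nat_mono)
  thus ?thesis by simp
qed

lemma T_char:
  assumes pp: "\<forall>j<length ts. pperm d (ts!j)"
  defines "Dset \<equiv> \<lambda>i. {x. x \<in> dom (ts!i) \<and> (\<forall>j<length ts. j \<noteq> i \<longrightarrow> x \<notin> dom (ts!j) \<and> the ((ts!i) x) \<notin> ran (ts!j))}"
  shows "i < length ts \<Longrightarrow> x \<in> Dset i \<Longrightarrow> psum (map (\<lambda>i. ts!i \<circ>\<^sub>m dpi d ts i) [0..<length ts]) x = (ts!i) x"
    and "(\<forall>i<length ts. x \<notin> Dset i) \<Longrightarrow> psum (map (\<lambda>i. ts!i \<circ>\<^sub>m dpi d ts i) [0..<length ts]) x = None"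
proof -
  have ch: "\<And>i. i < length ts \<Longrightarrow> (ts!i \<circ>\<^sub>m dpi d ts i) x = (if x \<in> Dset i then (ts!i) x else None)"
    using dpi_char[OF pp] unfolding Dset_def by simp
  {
    assume i: "i < length ts" and x: "x \<in> Dset i"
    have "\<forall>j<length ts. j \<noteq> i \<longrightarrow> x \<notin> Dset j" using x i unfolding Dset_def by auto
    hence "\<forall>j<length (map (\<lambda>i. ts!i \<circ>\<^sub>m dpi d ts i) [0..<length ts]). j \<noteq> i \<longrightarrow>
      (map (\<lambda>i. ts!i \<circ>\<^sub>m dpi d ts i) [0..<length ts] ! j) x = None" using ch by simp
    hence "psum (map (\<lambda>i. ts!i \<circ>\<^sub>m dpi d ts i) [0..<length ts]) x =
           (map (\<lambda>i. ts!i \<circ>\<^sub>m dpi d ts i) [0..<length ts] ! i) x"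
      using i by (intro psum_unique) auto
    thus "psum (map (\<lambda>i. ts!i \<circ>\<^sub>m dpi d ts i) [0..<length ts]) x = (ts!i) x" using ch i x by simp
  }
  {
    assume "\<forall>i<length ts. x \<notin> Dset i"
    thus "psum (map (\<lambda>i. ts!i \<circ>\<^sub>m dpi d ts i) [0..<length ts]) x = None"
      using ch by (auto simp: psum_None)
  }
qed

lemma cul: "finite A \<Longrightarrow> finite B \<Longrightarrow> real (card A) \<le> x \<Longrightarrow> real (card B) \<le> y \<Longrightarrow> real (card (A \<union> B)) \<le> x + y"
  using card_Un_real[of A B] by linarith

lemma comb:
  fixes ts :: "(nat \<rightharpoonup> nat) list" and a z E :: "nat \<rightharpoonup> nat" and e :: "nat \<Rightarrow> (nat \<rightharpoonup> nat)"
    and I :: "nat set" and c ms :: real and m :: "nat \<Rightarrow> real"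
  assumes ppt: "\<forall>j<length ts. pperm d (ts!j)" and ppa: "pperm d a" and ppz: "pperm d z" and ppE: "pperm d E"
    and ppe: "\<forall>i\<in>I. pperm d (e i)"
    and I: "I \<subseteq> {..<length ts}"
    and H1: "\<forall>i\<in>I. real (card (bad d (ts!i) (a \<circ>\<^sub>m e i))) \<le> c"
    and H2: "\<forall>i\<in>I. real (card (bad d (e i) (e i \<circ>\<^sub>m e i))) \<le> c"
    and H3: "\<forall>i\<in>I. real (card (bad d (ts!i) (ts!i \<circ>\<^sub>m e i))) \<le> c"
    and H6: "\<forall>i\<in>I. \<forall>j\<in>I. i \<noteq> j \<longrightarrow> real (card (bad d (e i \<circ>\<^sub>m e j) z)) \<le> c"
    and H7: "real (card (bad d z (z \<circ>\<^sub>m z))) \<le> c" "real (card (fixs d z)) \<le> c"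
    and H8: "real (card (bad d a (a \<circ>\<^sub>m E))) \<le> c" "real (card (bad d E (E \<circ>\<^sub>m E))) \<le> c"
       "real (card (fixs d E)) \<le> ms * d + c"
    and H9: "\<forall>i\<in>I. real (card (bad d (e i) (E \<circ>\<^sub>m e i))) \<le> c \<and> real (card (fixs d (e i))) \<ge> m i * d - c"
    and H10: "ms \<le> (\<Sum>i\<in>I. m i)"
    and H11: "\<forall>i<length ts. i \<notin> I \<longrightarrow> ts!i = z"
  shows "real (card (bad d a (psum (map (\<lambda>i. ts!i \<circ>\<^sub>m dpi d ts i) [0..<length ts])))) \<le> 17 * (real (card I) + 1)^2 * c"
proof -
  define k where "k = length ts"
  define t where "t = (\<lambda>i. ts!i)"
  define T where "T = psum (map (\<lambda>i. ts!i \<circ>\<^sub>m dpi d ts i) [0..<length ts])"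
  define K where "K = real (card I)"
  define Dset where "Dset = (\<lambda>i. {x. x \<in> dom (ts!i) \<and> (\<forall>j<length ts. j \<noteq> i \<longrightarrow> x \<notin> dom (ts!j) \<and> the ((ts!i) x) \<notin> ran (ts!j))})"
  have finI: "finite I" using I finite_subset by blast
  have c0: "c \<ge> 0" using H7(2) of_nat_0_le_iff order_trans by blast
  have K0: "K \<ge> 0" by (simp add: K_def)
  have ppti: "\<And>i. i \<in> I \<Longrightarrow> pperm d (t i)" using ppt I t_def by auto
  have fdz: "finite (dom z)" using finite_dom_pp[OF ppz] .
  have hz: "real (card (dom z)) \<le> 2 * c"
  proof -
    have "real (card (dom z)) \<le> real (card (fixs d z \<union> bad d z (z \<circ>\<^sub>m z)))"
      using domfix[OF ppz] by (intro card_mono_real) auto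
    also have "\<dots> \<le> real (card (fixs d z)) + real (card (bad d z (z \<circ>\<^sub>m z)))" by (intro card_Un_real) auto
    finally show ?thesis using H7 by linarith
  qed
  have hrz: "real (card (ran z)) \<le> 2 * c" using card_ran_le[OF ppz] hz by (meson of_nat_le_iff order_trans)
  define U1 where "U1 = (\<Union>i\<in>I. bad d (t i) (a \<circ>\<^sub>m e i) \<union> bad d (t i) (t i \<circ>\<^sub>m e i))"
  define W where "W = fixs d E - (\<Union>i\<in>I. dom (e i))"
  define U3 where "U3 = bad d a (a \<circ>\<^sub>m E) \<union> bad d E (E \<circ>\<^sub>m E) \<union> (\<Union>i\<in>I. bad d (e i) (e i \<circ>\<^sub>m e i) \<union> bad d (t i) (a \<circ>\<^sub>m e i)) \<union> W"
  define Y where "Y = (\<lambda>i. {x\<in>dom (t i). the (t i x) \<in> ran z})"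
  define U4 where "U4 = (\<Union>i\<in>I. Y i)"
  define Ov where "Ov = (\<lambda>i j. dom (t i) \<inter> dom (t j))"
  define Rr where "Rr = (\<lambda>i j. {x\<in>dom (t i). the (t i x) \<in> ran (t j)})"
  define P where "P = {(i,j). i \<in> I \<and> j \<in> I \<and> i \<noteq> j}"
  define U5 where "U5 = (\<Union>p\<in>P. Ov (fst p) (snd p) \<union> Rr (fst p) (snd p))"
  have finP: "finite P" by (rule finite_subset[of P "I \<times> I"]) (auto simp: P_def intro: finite_cartesian_product[OF finI finI])
  have incl: "bad d a T \<subseteq> U1 \<union> dom z \<union> U3 \<union> U4 \<union> U5"
  proof
    fix x assume xb: "x \<in> bad d a T"
    hence xd: "x \<in> {1..d}" and ax: "a x \<noteq> T x" by (auto simp: bad_def)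
    show "x \<in> U1 \<union> dom z \<union> U3 \<union> U4 \<union> U5"
    proof (cases "\<exists>i<length ts. x \<in> Dset i")
      case True
      then obtain i where i: "i < length ts" "x \<in> Dset i" by auto
      have Tx: "T x = t i x" using T_char(1)[OF ppt i(1), of x] i(2) unfolding T_def t_def Dset_def by simp
      have xdom: "x \<in> dom (t i)" using i(2) unfolding Dset_def t_def by simp
      show ?thesis
      proof (cases "i \<in> I")
        case True
        show ?thesis
        proof (cases "x \<in> bad d (t i) (t i \<circ>\<^sub>m e i)")
          case True thus ?thesis using `i \<in> I` unfolding U1_def by blast
        next
          case False
          hence "x \<in> fixs d (e i)" using fix_from_comp[OF ppti[OF `i\<in>I`] xdom] by blast
          hence "(a \<circ>\<^sub>m e i) x = a x" by (simp add: fixs_def)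
          hence "x \<in> bad d (t i) (a \<circ>\<^sub>m e i)" using ax Tx xd by (simp add: bad_def)
          thus ?thesis using `i \<in> I` unfolding U1_def by blast
        qed
      next
        case False
        hence "t i = z" using H11 i t_def by auto
        thus ?thesis using xdom by auto
      qed
    next
      case False
      hence Tx: "T x = None" using T_char(2)[OF ppt] unfolding T_def Dset_def by auto
      hence anone: "a x \<noteq> None" using ax by simp
      show ?thesis
      proof (cases "\<exists>i\<in>I. x \<in> dom (t i)")
        case True
        then obtain i where i: "i \<in> I" "x \<in> dom (t i)" by auto
        have ik: "i < length ts" using I i by auto
        have "x \<notin> Dset i" using False ik by auto
        then obtain j where j: "j < length ts" "j \<noteq> i" "x \<in> dom (t j) \<or> the (t i x) \<in> ran (t j)"
          using i(2) unfolding Dset_def t_def by auto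
        show ?thesis
        proof (cases "j \<in> I")
          case True
          hence "(i,j) \<in> P" using i j unfolding P_def by auto
          moreover have "x \<in> Ov i j \<union> Rr i j" using i j unfolding Ov_def Rr_def by auto
          ultimately show ?thesis unfolding U5_def by force
        next
          case False
          hence "t j = z" using H11 j t_def by auto
          hence "x \<in> dom z \<or> x \<in> Y i" using j i unfolding Y_def by auto
          thus ?thesis using i unfolding U4_def by blast
        qed
      next
        case False
        hence notd: "\<forall>i\<in>I. t i x = None" by auto
        show ?thesis
        proof (cases "x \<in> bad d a (a \<circ>\<^sub>m E)")
          case True thus ?thesis unfolding U3_def by blast
        next
          case nb: False
          hence "(a \<circ>\<^sub>m E) x = a x" using xd by (simp add: bad_def)
          hence "x \<in> dom E" using anone by (cases "E x") auto
          hence "x \<in> fixs d E \<union> bad d E (E \<circ>\<^sub>m E)" using domfix[OF ppE] by blast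
          moreover
          {
            assume fE: "x \<in> fixs d E"
            have "x \<in> U3"
            proof (cases "\<exists>i\<in>I. x \<in> dom (e i)")
              case True
              then obtain i where i: "i \<in> I" "x \<in> dom (e i)" by auto
              hence "x \<in> fixs d (e i) \<union> bad d (e i) (e i \<circ>\<^sub>m e i)" using domfix ppe by blast
              moreover
              {
                assume "x \<in> fixs d (e i)"
                hence "(a \<circ>\<^sub>m e i) x = a x" by (simp add: fixs_def)
                moreover have "t i x = None" using notd i by blast
                ultimately have "t i x \<noteq> (a \<circ>\<^sub>m e i) x" using anone by auto
                hence "x \<in> bad d (t i) (a \<circ>\<^sub>m e i)" using xd bad_iff by blast
              }
              ultimately show ?thesis using i unfolding U3_def by blast
            next
              case False
              thus ?thesis using fE unfolding U3_def W_def by blast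
            qed
          }
          ultimately show ?thesis unfolding U3_def by blast
        qed
      qed
    qed
  qed
  have bU1: "real (card U1) \<le> K * (2*c)"
    unfolding U1_def K_def
    using H1 H3 unfolding t_def by (intro card_UN_real[OF finI]) (smt (verit) card_Un_real finite_bad)
  have bY: "\<forall>i\<in>I. real (card (Y i)) \<le> 2 * c"
  proof
    fix i assume i: "i \<in> I"
    have "inj_on (\<lambda>x. the (t i x)) (Y i)"
      using pperm_inj[OF ppti[OF i]] unfolding Y_def inj_on_def by (metis (no_types, lifting) domIff mem_Collect_eq option.expand)
    moreover have "(\<lambda>x. the (t i x)) ` Y i \<subseteq> ran z" unfolding Y_def by auto
    ultimately have "card (Y i) \<le> card (ran z)" using finite_ran_pp[OF ppz] card_inj_on_le by blast
    thus "real (card (Y i)) \<le> 2 * c" using hrz by linarith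
  qed
  have bU4: "real (card U4) \<le> K * (2*c)" unfolding U4_def K_def using bY by (intro card_UN_real[OF finI]) auto
  have bO: "\<forall>i\<in>I. \<forall>j\<in>I. i \<noteq> j \<longrightarrow> real (card (Ov i j)) \<le> 5 * c"
  proof (intro ballI impI)
    fix i j assume i: "i \<in> I" and j: "j \<in> I" and ij: "i \<noteq> j"
    have "Ov i j \<subseteq> bad d (t i) (t i \<circ>\<^sub>m e i) \<union> bad d (t j) (t j \<circ>\<^sub>m e j) \<union> (bad d (e i \<circ>\<^sub>m e j) z \<union> dom z)"
    proof
      fix x assume x: "x \<in> Ov i j"
      show "x \<in> bad d (t i) (t i \<circ>\<^sub>m e i) \<union> bad d (t j) (t j \<circ>\<^sub>m e j) \<union> (bad d (e i \<circ>\<^sub>m e j) z \<union> dom z)"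
      proof (cases "x \<in> bad d (t i) (t i \<circ>\<^sub>m e i) \<union> bad d (t j) (t j \<circ>\<^sub>m e j)")
        case True thus ?thesis by blast
      next
        case False
        hence "x \<in> fixs d (e i) \<inter> fixs d (e j)"
          using fix_from_comp[OF ppti[OF i], of x] fix_from_comp[OF ppti[OF j], of x] x unfolding Ov_def by blast
        thus ?thesis using fixfix by blast
      qed
    qed
    hence "real (card (Ov i j)) \<le> real (card (bad d (t i) (t i \<circ>\<^sub>m e i))) + real (card (bad d (t j) (t j \<circ>\<^sub>m e j))) + (real (card (bad d (e i \<circ>\<^sub>m e j) z)) + real (card (dom z)))"
      by (smt (verit) card_Un_real card_mono_real fdz finite_UnI finite_bad)
    moreover have "real (card (bad d (t i) (t i \<circ>\<^sub>m e i))) \<le> c" using bspec[OF H3 i] unfolding t_def .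
    moreover have "real (card (bad d (t j) (t j \<circ>\<^sub>m e j))) \<le> c" using bspec[OF H3 j] unfolding t_def .
    moreover have "real (card (bad d (e i \<circ>\<^sub>m e j) z)) \<le> c" using H6 i j ij by blast
    ultimately show "real (card (Ov i j)) \<le> 5 * c" using hz by linarith
  qed
  define Bs where "Bs = (\<lambda>i. bad d (t i) (t i \<circ>\<^sub>m e i) \<union> bad d (t i) (a \<circ>\<^sub>m e i))"
  have bBs: "\<forall>i\<in>I. real (card (Bs i)) \<le> 2 * c"
  proof
    fix i assume i: "i \<in> I"
    have "real (card (Bs i)) \<le> real (card (bad d (t i) (t i \<circ>\<^sub>m e i))) + real (card (bad d (t i) (a \<circ>\<^sub>m e i)))"
      unfolding Bs_def by (rule card_Un_real) auto
    moreover have "real (card (bad d (t i) (t i \<circ>\<^sub>m e i))) \<le> c" using bspec[OF H3 i] unfolding t_def .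
    moreover have "real (card (bad d (t i) (a \<circ>\<^sub>m e i))) \<le> c" using bspec[OF H1 i] unfolding t_def .
    ultimately show "real (card (Bs i)) \<le> 2 * c" by linarith
  qed
  have good: "\<And>i x. i \<in> I \<Longrightarrow> x \<in> dom (t i) \<Longrightarrow> x \<notin> Bs i \<Longrightarrow> a x = t i x"
  proof -
    fix i x assume i: "i \<in> I" and x: "x \<in> dom (t i)" and nb: "x \<notin> Bs i"
    have "x \<in> fixs d (e i)" using fix_from_comp[OF ppti[OF i] x] nb unfolding Bs_def by blast
    hence "(a \<circ>\<^sub>m e i) x = a x" using fixs_iff by (metis map_comp_simps(2))
    moreover have "x \<in> {1..d}" using x pperm_dom[OF ppti[OF i]] by blast
    moreover have "x \<notin> bad d (t i) (a \<circ>\<^sub>m e i)" using nb unfolding Bs_def by blast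
    ultimately show "a x = t i x" using bad_iff[of x d "t i" "a \<circ>\<^sub>m e i"] by simp
  qed
  have bR: "\<forall>i\<in>I. \<forall>j\<in>I. i \<noteq> j \<longrightarrow> real (card (Rr i j)) \<le> 9 * c"
  proof (intro ballI impI)
    fix i j assume i: "i \<in> I" and j: "j \<in> I" and ij: "i \<noteq> j"
    define h where "h = (\<lambda>x'. the (pinv (t i) (the (t j x'))))"
    have "Rr i j \<subseteq> Bs i \<union> Ov i j \<union> h ` Bs j"
    proof
      fix x assume x: "x \<in> Rr i j"
      show "x \<in> Bs i \<union> Ov i j \<union> h ` Bs j"
      proof (cases "x \<in> Bs i \<union> Ov i j")
        case True thus ?thesis by blast
      next
        case False
        obtain y where y: "t i x = Some y" using x unfolding Rr_def by auto
        have "y \<in> ran (t j)" using x y unfolding Rr_def by auto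
        then obtain x' where x': "t j x' = Some y" by (auto simp: ran_def)
        have xd: "x \<in> dom (t i)" using y by blast
        have ax: "a x = Some y" using good[OF i xd] False y by simp
        have "pinv (t i) y = Some x" using y pinv_Some[OF pperm_inj[OF ppti[OF i]]] by blast
        hence hx: "h x' = x" unfolding h_def using x' by simp
        have "x' \<in> Bs j"
        proof (rule ccontr)
          assume "x' \<notin> Bs j"
          hence "a x' = Some y" using good[OF j _] x' by (metis domI)
          hence "x' = x" using inj_dom[OF pperm_inj[OF ppa]] ax by metis
          hence "x \<in> Ov i j" using x' xd unfolding Ov_def by blast
          thus False using False by blast
        qed
        thus ?thesis using hx by blast
      qed
    qed
    hence "real (card (Rr i j)) \<le> real (card (Bs i \<union> Ov i j \<union> h ` Bs j))"
      by (rule card_mono_real[rotated]) (auto simp: Bs_def Ov_def intro: finite_dom_pp ppti i)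
    also have "\<dots> \<le> real (card (Bs i)) + real (card (Ov i j)) + real (card (h ` Bs j))"
    proof -
      have f1: "finite (Bs i)" "finite (Ov i j)" "finite (h ` Bs j)"
        unfolding Bs_def Ov_def using finite_dom_pp[OF ppti[OF i]] by auto
      show ?thesis using card_Un_real[OF f1(1) f1(2)] card_Un_real[of "Bs i \<union> Ov i j" "h ` Bs j"] f1 by auto
    qed
    also have "\<dots> \<le> 2*c + 5*c + 2*c"
    proof -
      have "card (h ` Bs j) \<le> card (Bs j)" by (rule card_image_le) (simp add: Bs_def)
      hence "real (card (h ` Bs j)) \<le> 2*c" using bBs j by (meson of_nat_le_iff order_trans)
      moreover have "real (card (Bs i)) \<le> 2*c" using bBs i by blast
      moreover have "real (card (Ov i j)) \<le> 5*c" using bO i j ij by blast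
      ultimately show ?thesis by linarith
    qed
    finally show "real (card (Rr i j)) \<le> 9 * c" by simp
  qed
  have cP: "real (card P) \<le> K^2"
  proof -
    have "card P \<le> card (I \<times> I)" unfolding P_def using finI by (intro card_mono) auto
    hence "card P \<le> card I * card I" by (simp add: card_cartesian_product)
    hence "real (card P) \<le> real (card I * card I)" by (rule of_nat_mono)
    thus ?thesis unfolding K_def by (simp add: power2_eq_square)
  qed
  have bU5: "real (card U5) \<le> K^2 * (14*c)"
  proof -
    have "real (card U5) \<le> real (card P) * (14*c)" unfolding U5_def
    proof (intro card_UN_real[OF finP] ballI)
      fix p assume "p \<in> P"
      then obtain i j where p: "p = (i,j)" "i \<in> I" "j \<in> I" "i \<noteq> j" unfolding P_def by auto
      have "finite (Ov i j)" "finite (Rr i j)"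
        unfolding Ov_def Rr_def using finite_dom_pp[OF ppti[OF p(2)]] by auto
      hence "real (card (Ov i j \<union> Rr i j)) \<le> real (card (Ov i j)) + real (card (Rr i j))" by (rule card_Un_real)
      moreover have "real (card (Ov i j)) \<le> 5*c" using bO p by blast
      moreover have "real (card (Rr i j)) \<le> 9*c" using bR p by blast
      ultimately show "real (card (Ov (fst p) (snd p) \<union> Rr (fst p) (snd p))) \<le> 14 * c" using p(1) by simp
    qed
    also have "\<dots> \<le> K^2 * (14*c)" using cP c0 by (intro mult_right_mono) auto
    finally show ?thesis .
  qed
  define A where "A = (\<lambda>i. fixs d (e i) \<inter> fixs d E)"
  have bA: "\<forall>i\<in>I. real (card (A i)) \<ge> m i * d - 2 * c"
  proof
    fix i assume i: "i \<in> I"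
    have "fixs d (e i) \<subseteq> A i \<union> bad d (e i) (E \<circ>\<^sub>m e i)"
    proof
      fix x assume "x \<in> fixs d (e i)"
      hence x: "x \<in> {1..d}" "e i x = Some x" using fixs_iff by auto
      show "x \<in> A i \<union> bad d (e i) (E \<circ>\<^sub>m e i)"
      proof (cases "E x = Some x")
        case True thus ?thesis using x fixs_iff unfolding A_def by blast
      next
        case False
        hence "e i x \<noteq> (E \<circ>\<^sub>m e i) x" using x by simp
        thus ?thesis using x bad_iff by blast
      qed
    qed
    hence "real (card (fixs d (e i))) \<le> real (card (A i)) + real (card (bad d (e i) (E \<circ>\<^sub>m e i)))"
      unfolding A_def by (smt (verit) card_Un_real card_mono_real finite_Int finite_UnI finite_bad finite_fixs)
    moreover have "real (card (bad d (e i) (E \<circ>\<^sub>m e i))) \<le> c" "real (card (fixs d (e i))) \<ge> m i * d - c" using bspec[OF H9 i] by auto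
    ultimately show "real (card (A i)) \<ge> m i * d - 2 * c" by linarith
  qed
  have bAA: "\<forall>i\<in>I. \<forall>j\<in>I-{i}. real (card (A i \<inter> A j)) \<le> 3 * c"
  proof (intro ballI)
    fix i j assume i: "i \<in> I" and j: "j \<in> I - {i}"
    have "A i \<inter> A j \<subseteq> bad d (e i \<circ>\<^sub>m e j) z \<union> dom z" unfolding A_def using fixfix by blast
    hence "real (card (A i \<inter> A j)) \<le> real (card (bad d (e i \<circ>\<^sub>m e j) z)) + real (card (dom z))"
      by (smt (verit) card_Un_real card_mono_real fdz finite_UnI finite_bad)
    moreover have "real (card (bad d (e i \<circ>\<^sub>m e j) z)) \<le> c"
    proof -
      have "j \<in> I" "i \<noteq> j" using j by auto
      thus ?thesis using H6 i by blast
    qed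
    ultimately show "real (card (A i \<inter> A j)) \<le> 3 * c" using hz by linarith
  qed
  have bon: "(\<Sum>i\<in>I. real (card (A i))) \<le> real (card (\<Union>i\<in>I. A i)) + (\<Sum>i\<in>I. \<Sum>j\<in>I-{i}. real (card (A i \<inter> A j)))"
    by (rule bonf[OF finI]) (simp add: A_def)
  have s1: "(\<Sum>i\<in>I. \<Sum>j\<in>I-{i}. real (card (A i \<inter> A j))) \<le> K * (K * (3*c))"
  proof -
    have "\<forall>i\<in>I. (\<Sum>j\<in>I-{i}. real (card (A i \<inter> A j))) \<le> K * (3*c)"
    proof
      fix i assume i: "i \<in> I"
      have "(\<Sum>j\<in>I-{i}. real (card (A i \<inter> A j))) \<le> real (card (I-{i})) * (3*c)"
        using sum_bounded_above[of "I-{i}" "\<lambda>j. real (card (A i \<inter> A j))" "3*c"] bAA i by simp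
      also have "\<dots> \<le> K * (3*c)" unfolding K_def using c0 finI by (intro mult_right_mono) (auto intro: card_mono)
      finally show "(\<Sum>j\<in>I-{i}. real (card (A i \<inter> A j))) \<le> K * (3*c)" .
    qed
    thus ?thesis using sum_bounded_above[of I _ "K*(3*c)"] unfolding K_def by simp
  qed
  have s2: "(\<Sum>i\<in>I. m i * d - 2 * c) \<le> (\<Sum>i\<in>I. real (card (A i)))" using bA by (intro sum_mono) auto
  have s3: "(\<Sum>i\<in>I. m i * d - 2 * c) = (\<Sum>i\<in>I. m i) * d - K * (2*c)"
    unfolding K_def by (simp add: sum_subtractf sum_distrib_right)
  have msd: "ms * d \<le> (\<Sum>i\<in>I. m i) * d" using H10 by (intro mult_right_mono) auto
  have "fixs d E = W \<union> (fixs d E \<inter> (\<Union>i\<in>I. dom (e i)))" "W \<inter> (fixs d E \<inter> (\<Union>i\<in>I. dom (e i))) = {}"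
    unfolding W_def by auto
  hence cW: "real (card (fixs d E)) = real (card W) + real (card (fixs d E \<inter> (\<Union>i\<in>I. dom (e i))))"
    by (metis card_Un_disjoint finite_Int finite_fixs of_nat_add W_def finite_Diff)
  have "(\<Union>i\<in>I. A i) \<subseteq> fixs d E \<inter> (\<Union>i\<in>I. dom (e i))" unfolding A_def by (auto simp: fixs_def)
  hence "real (card (\<Union>i\<in>I. A i)) \<le> real (card (fixs d E \<inter> (\<Union>i\<in>I. dom (e i))))"
    by (intro card_mono_real) auto
  hence bW: "real (card W) \<le> c + K * (2*c) + K * (K * (3*c))"
    using cW H8(3) bon s1 s2 s3 msd by linarith
  have finV: "finite (\<Union>i\<in>I. bad d (e i) (e i \<circ>\<^sub>m e i) \<union> bad d (t i) (a \<circ>\<^sub>m e i))"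
    by (rule finite_UN_I[OF finI]) simp
  have finW: "finite W" unfolding W_def by simp
  have bU3: "real (card U3) \<le> c + c + K * (2*c) + real (card W)"
  proof -
    have "real (card (\<Union>i\<in>I. bad d (e i) (e i \<circ>\<^sub>m e i) \<union> bad d (t i) (a \<circ>\<^sub>m e i))) \<le> K * (2*c)"
      unfolding K_def using H1 H2 unfolding t_def by (intro card_UN_real[OF finI]) (smt (verit) card_Un_real finite_bad)
    thus ?thesis unfolding U3_def
      by (intro cul finite_UnI finV finW finite_bad H8(1) H8(2) order_refl)
  qed
  have finU: "finite U1" "finite U3" "finite U4" "finite U5"
  proof -
    show "finite U1" unfolding U1_def by (rule finite_UN_I[OF finI]) simp
    show "finite U3" unfolding U3_def by (intro finite_UnI finV finW finite_bad)
    show "finite U4" unfolding U4_def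
    proof (rule finite_UN_I[OF finI])
      fix i assume i: "i \<in> I"
      have "Y i \<subseteq> dom (t i)" unfolding Y_def by blast
      thus "finite (Y i)" using finite_dom_pp[OF ppti[OF i]] by (rule finite_subset)
    qed
    show "finite U5" unfolding U5_def
    proof (rule finite_UN_I[OF finP])
      fix p assume "p \<in> P"
      hence i: "fst p \<in> I" unfolding P_def by auto
      have "finite (dom (t (fst p)))" using finite_dom_pp[OF ppti[OF i]] .
      thus "finite (Ov (fst p) (snd p) \<union> Rr (fst p) (snd p))" unfolding Ov_def Rr_def
        by (intro finite_UnI) (rule finite_subset[rotated], assumption, blast)+
    qed
  qed
  have "real (card (bad d a T)) \<le> real (card (U1 \<union> dom z \<union> U3 \<union> U4 \<union> U5))"
    using incl by (intro card_mono_real finite_UnI finU fdz)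
  also have "\<dots> \<le> real (card U1) + real (card (dom z)) + real (card U3) + real (card U4) + real (card U5)"
    by (intro cul finite_UnI finU fdz order_refl)
  also have "\<dots> \<le> (17 * K^2 + 8 * K + 5) * c"
    using bU1 hz bU3 bW bU4 bU5 by (simp add: algebra_simps power2_eq_square)
  also have "\<dots> \<le> 17 * (K + 1)^2 * c"
    using c0 K0 by (intro mult_right_mono) (auto simp: power2_eq_square algebra_simps)
  finally show ?thesis unfolding T_def K_def .
qed

lemma space_std: "std_prob_space M \<Longrightarrow> space M = UNIV"
  unfolding std_prob_space_def using sets_eq_imp_space_eq[of M borel] by simp

lemma map_comp_assoc': "(f \<circ>\<^sub>m g) \<circ>\<^sub>m h = f \<circ>\<^sub>m (g \<circ>\<^sub>m h)"
  by (rule ext) (simp add: map_comp_def split: option.splits)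

lemma pone_comp[simp]: "pone \<circ>\<^sub>m b = b"
  by (rule ext) (simp add: map_comp_def pone_def split: option.splits)
lemma comp_pone[simp]: "b \<circ>\<^sub>m pone = b"
  by (rule ext) (simp add: map_comp_def pone_def)

lemma comp_restr_pone: "X \<circ>\<^sub>m (pone |` A) = X |` A"
  by (rule ext) (simp add: restrict_map_def pone_def)

lemma restr_pone_comp: "(pone |` A) \<circ>\<^sub>m (pone |` B) = pone |` (A \<inter> B)"
  by (rule ext) (simp add: restrict_map_def pone_def map_comp_def)

lemma restr_dom_self: "X |` dom X = X"
proof (rule ext)
  fix x show "(X |` dom X) x = X x" by (cases "X x") (auto simp: restrict_map_def)
qed

lemma inj_restr: assumes "inj_on f (dom f)" shows "inj_on (f |` A) (dom (f |` A))"
proof (rule inj_onI)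
  fix x y assume "x \<in> dom (f|`A)" "y \<in> dom (f|`A)" "(f|`A) x = (f|`A) y"
  hence "x \<in> dom f" "y \<in> dom f" "f x = f y" by (auto simp: restrict_map_def split: if_splits)
  thus "x = y" using inj_onD[OF assms] by blast
qed

lemma inj_pone: "inj_on pone (dom pone)" by (simp add: pone_def)

lemma pinv_pone: "pinv pone = pone"
proof (rule ext)
  fix y show "pinv pone y = pone y"
    using pinv_Some[OF inj_pone, of y y] by (simp add: pone_def)
qed

lemma pinv_inj: assumes "inj_on f (dom f)" shows "inj_on (pinv f) (dom (pinv f))"
proof (rule inj_onI)
  fix x y assume "x \<in> dom (pinv f)" "y \<in> dom (pinv f)" and e: "pinv f x = pinv f y"
  then obtain z where z: "pinv f x = Some z" by auto
  hence "f z = Some x" using pinv_Some[OF assms] by blast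
  moreover have "f z = Some y" using z e pinv_Some[OF assms] by metis
  ultimately show "x = y" by simp
qed

lemma option_eqI: "(\<And>y. a = Some y \<longleftrightarrow> b = Some y) \<Longrightarrow> a = b"
  by (cases a; cases b) auto

lemma pinv_pinv: "inj_on f (dom f) \<Longrightarrow> pinv (pinv f) = f"
proof (rule ext, rule option_eqI)
  fix x y assume "inj_on f (dom f)"
  thus "pinv (pinv f) x = Some y \<longleftrightarrow> f x = Some y"
    using pinv_Some[OF pinv_inj] pinv_Some by metis
qed

lemma pinv_restr: "inj_on f (dom f) \<Longrightarrow> y \<in> ran (f |` A) \<Longrightarrow> pinv (f |` A) y = pinv f y"
proof -
  assume inj: "inj_on f (dom f)" and y: "y \<in> ran (f |` A)"
  then obtain x where x: "(f |` A) x = Some y" by (auto simp: ran_def)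
  have injA: "inj_on (f |` A) (dom (f |` A))" by (rule inj_restr[OF inj])
  have "x \<in> A" "f x = Some y" using x by (auto simp: restrict_map_def split: if_splits)
  hence "pinv f y = Some x" using pinv_Some[OF inj] by blast
  moreover have "pinv (f |` A) y = Some x" using pinv_Some[OF injA] x by blast
  ultimately show ?thesis by simp
qed

lemma pelem_restr:
  assumes std: "std_prob_space M" and pc: "pmp_cber M R" and X: "pelem M R X" and A: "A \<in> sets M"
  shows "pelem M R (X |` A)"
proof -
  have sp: "space M = UNIV" using space_std[OF std] .
  have pb: "partial_borel_bij M R X" using X by (simp add: pelem_def)
  have inj: "inj_on X (dom X)" using pb by (simp add: partial_borel_bij_def)
  have dX: "dom X \<in> sets M" and rX: "ran X \<in> sets M" using pb by (auto simp: partial_borel_bij_def)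
  have m1: "(the \<circ> X) \<in> measurable (restrict_space M (dom X)) M" using pb by (simp add: partial_borel_bij_def)
  have m2: "(the \<circ> pinv X) \<in> measurable (restrict_space M (ran X)) M" using pb by (simp add: partial_borel_bij_def)
  have ranA: "ran (X |` A) = (the \<circ> pinv X) -` A \<inter> space (restrict_space M (ran X))"
  proof (rule set_eqI)
    fix y
    show "y \<in> ran (X |` A) \<longleftrightarrow> y \<in> (the \<circ> pinv X) -` A \<inter> space (restrict_space M (ran X))"
    proof
      assume "y \<in> ran (X |` A)"
      then obtain x where x: "x \<in> A" "X x = Some y" by (auto simp: ran_def restrict_map_def split: if_splits)
      hence "pinv X y = Some x" using pinv_Some[OF inj] by blast
      thus "y \<in> (the \<circ> pinv X) -` A \<inter> space (restrict_space M (ran X))"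
        using x sp by (auto simp: space_restrict_space ran_def)
    next
      assume "y \<in> (the \<circ> pinv X) -` A \<inter> space (restrict_space M (ran X))"
      hence y: "y \<in> ran X" "the (pinv X y) \<in> A" by (auto simp: space_restrict_space sp)
      then obtain x where "X x = Some y" by (auto simp: ran_def)
      hence "pinv X y = Some x" using pinv_Some[OF inj] by blast
      thus "y \<in> ran (X |` A)" using y `X x = Some y` by (auto simp: ran_def restrict_map_def intro!: exI[of _ x])
    qed
  qed
  have "ran (X |` A) \<in> sets (restrict_space M (ran X))"
    unfolding ranA by (rule measurable_sets[OF m2 A])
  hence rA: "ran (X |` A) \<in> sets M" using rX sp by (simp add: sets_restrict_space_iff)
  have injA: "inj_on (X |` A) (dom (X |` A))" by (rule inj_restr[OF inj])
  have RA: "\<forall>x y. (X |` A) x = Some y \<longrightarrow> (x, y) \<in> R" using pb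
    by (auto simp: partial_borel_bij_def restrict_map_def split: if_splits)
  have m1': "(the \<circ> X) \<in> measurable (restrict_space M (dom (X |` A))) M"
    by (rule measurable_restrict_mono[OF m1]) auto
  have "(the \<circ> (X |` A)) \<in> measurable (restrict_space M (dom (X |` A))) M"
    using m1' by (subst measurable_cong[where g="the \<circ> X"]) (auto simp: space_restrict_space)
  moreover
  have m2': "(the \<circ> pinv X) \<in> measurable (restrict_space M (ran (X |` A))) M"
    by (rule measurable_restrict_mono[OF m2]) (auto simp: ran_def restrict_map_def split: if_splits)
  have "(the \<circ> pinv (X |` A)) \<in> measurable (restrict_space M (ran (X |` A))) M"
    using m2' by (subst measurable_cong[where g="the \<circ> pinv X"]) (auto simp: space_restrict_space pinv_restr[OF inj])
  ultimately have "partial_borel_bij M R (X |` A)"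
    unfolding partial_borel_bij_def using dX A rA injA RA by auto
  thus ?thesis using pc by (simp add: pelem_def pmp_cber_def)
qed

lemma pelem_pone:
  assumes std: "std_prob_space M" and pc: "pmp_cber M R"
  shows "pelem M R pone"
proof -
  have sp: "space M = UNIV" using space_std[OF std] .
  have U: "UNIV \<in> sets M" using sets.top[of M] sp by simp
  have d: "dom pone = UNIV" and r: "ran pone = UNIV" by (auto simp: pone_def ran_def)
  have Rr: "\<forall>x y. pone x = Some y \<longrightarrow> (x, y) \<in> R" using pc
    by (auto simp: pmp_cber_def pone_def equiv_def refl_on_def)
  have i: "the \<circ> pone = id" by (rule ext) (simp add: pone_def)
  have m: "(id::'a\<Rightarrow>'a) \<in> measurable (restrict_space M UNIV) M"
    by (rule measurable_restrict_space1[OF measurable_ident])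
  have "partial_borel_bij M R pone"
    unfolding partial_borel_bij_def d r pinv_pone i using U Rr m by (simp add: pone_def)
  thus ?thesis using pc by (simp add: pelem_def pmp_cber_def)
qed

lemma pelem_pid:
  "std_prob_space M \<Longrightarrow> pmp_cber M R \<Longrightarrow> A \<in> sets M \<Longrightarrow> pelem M R (pone |` A)"
  using pelem_restr pelem_pone by blast

lemma pelem_empty:
  assumes "std_prob_space M" "pmp_cber M R" shows "pelem M R Map.empty"
proof -
  have "pone |` {} = Map.empty" by (rule ext) simp
  thus ?thesis using pelem_pid[OF assms, of "{}"] by simp
qed

lemma pelem_dom: "pelem M R X \<Longrightarrow> dom X \<in> sets M"
  by (simp add: pelem_def partial_borel_bij_def)
lemma pelem_inj: "pelem M R X \<Longrightarrow> inj_on X (dom X)"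
  by (simp add: pelem_def partial_borel_bij_def)

lemma ptau_pid: "ptau M (pone |` A) = measure M A"
proof -
  have "{x. (pone |` A) x = Some x} = A" by (auto simp: restrict_map_def pone_def)
  thus ?thesis by (simp add: ptau_def)
qed

lemma ptau_empty: "ptau M Map.empty = 0" by (simp add: ptau_def)

lemma pinv_comp_eq: "inj_on t (dom t) \<Longrightarrow> pinv t \<circ>\<^sub>m t = pone |` dom t"
  by (rule ext) (simp add: pinv_comp_self pone_def restrict_map_def)

lemma foldr_comp_pone: "foldr (\<circ>\<^sub>m) xs b = foldr (\<circ>\<^sub>m) xs pone \<circ>\<^sub>m b"
  by (induction xs) (simp_all add: map_comp_assoc')

lemma pprod_append: "pprod pone (xs @ ys) = pprod pone xs \<circ>\<^sub>m pprod pone ys"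
  unfolding pprod_def by (simp add: foldr_comp_pone[of xs "foldr (\<circ>\<^sub>m) ys pone"])

lemma pprod_Cons: "pprod pone (u # us) = u \<circ>\<^sub>m pprod pone us" by (simp add: pprod_def)
lemma pprod_Nil: "pprod pone [] = pone" by (simp add: pprod_def)

lemma pprod_repl: "pprod pone (replicate m pone) = pone"
  by (induction m) (simp_all add: pprod_def)

lemma pprod_inv:
  "(\<forall>u\<in>set us. inj_on u (dom u)) \<Longrightarrow> pprod pone (rev (map pinv us)) \<circ>\<^sub>m pprod pone us = pone |` dom (pprod pone us)"
proof (induction us)
  case Nil show ?case by (rule ext) (simp add: pprod_def pone_def)
next
  case (Cons u us)
  let ?P = "pprod pone us" and ?Q = "pprod pone (rev (map pinv us))"
  have inju: "inj_on u (dom u)" using Cons.prems by simp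
  have IH: "?Q \<circ>\<^sub>m ?P = pone |` dom ?P" using Cons by simp
  have e: "pprod pone (rev (map pinv (u # us))) = ?Q \<circ>\<^sub>m pinv u"
    by (simp add: pprod_append pprod_Cons pprod_Nil)
  show ?case
  proof (rule ext)
    fix x
    show "(pprod pone (rev (map pinv (u # us))) \<circ>\<^sub>m pprod pone (u # us)) x = (pone |` dom (pprod pone (u # us))) x"
    proof (cases "?P x")
      case None
      hence "x \<notin> dom (pprod pone (u # us))" by (simp add: pprod_Cons dom_def)
      thus ?thesis using None by (simp add: e pprod_Cons)
    next
      case (Some y)
      show ?thesis
      proof (cases "u y")
        case None
        hence "x \<notin> dom (pprod pone (u # us))" using Some by (simp add: pprod_Cons dom_def)
        thus ?thesis using None Some by (simp add: e pprod_Cons)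
      next
        case (Some z)
        have pz: "pinv u z = Some y" using pinv_Some[OF inju] Some by blast
        have "x \<in> dom ?P" using `?P x = Some y` by blast
        hence "(?Q \<circ>\<^sub>m ?P) x = Some x" using IH by (simp add: pone_def)
        hence qy: "?Q y = Some x" using `?P x = Some y` by simp
        have L: "(pprod pone (rev (map pinv (u # us))) \<circ>\<^sub>m pprod pone (u # us)) x = Some x"
          unfolding e pprod_Cons using `?P x = Some y` Some pz qy by simp
        have "x \<in> dom (pprod pone (u # us))" unfolding pprod_Cons using `?P x = Some y` Some by (simp add: dom_def)
        hence "(pone |` dom (pprod pone (u # us))) x = Some x" by (simp add: pone_def)
        thus ?thesis using L by simp
      qed
    qed
  qed
qed

lemma pone_Fpm: "pone \<in> Fpm F" by (simp add: Fpm_def)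

lemma Fpm_inj: assumes "\<forall>t\<in>F. pelem M R t" "u \<in> Fpm F" shows "inj_on u (dom u)"
  using assms pelem_inj pinv_inj inj_pone unfolding Fpm_def by blast

lemma Fpm_pinv: assumes "\<forall>t\<in>F. pelem M R t" "u \<in> Fpm F" shows "pinv u \<in> Fpm F"
proof -
  consider "u \<in> F" | f where "f \<in> F" "u = pinv f" | "u = pone" using assms(2) unfolding Fpm_def by blast
  thus ?thesis
  proof cases
    case 1 thus ?thesis unfolding Fpm_def by blast
  next
    case 2
    have "pinv u = f" using 2 pinv_pinv pelem_inj assms(1) by blast
    thus ?thesis using 2 unfolding Fpm_def by blast
  next
    case 3 thus ?thesis unfolding 3 pinv_pone by (simp add: Fpm_def)
  qed
qed

lemma ppow_mono4:
  assumes "t \<in> ppow (Fpm F) n" shows "t \<in> ppow (Fpm F) (4*n)"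
proof -
  obtain us where us: "t = pprod pone us" "length us = n" "set us \<subseteq> Fpm F" using assms by (auto simp: ppow_def)
  let ?vs = "us @ replicate (3*n) pone"
  have "pprod pone ?vs = t" using us by (simp add: pprod_append pprod_repl)
  moreover have "length ?vs = 4*n" "set ?vs \<subseteq> Fpm F" using us pone_Fpm by auto
  ultimately show ?thesis unfolding ppow_def by blast
qed

lemma ppow_pid:
  assumes F: "\<forall>t\<in>F. pelem M R t" and t: "t \<in> ppow (Fpm F) n" shows "pone |` dom t \<in> ppow (Fpm F) (4*n)"
proof -
  obtain us where us: "t = pprod pone us" "length us = n" "set us \<subseteq> Fpm F" using t by (auto simp: ppow_def)
  let ?vs = "rev (map pinv us) @ us @ replicate (2*n) pone"
  have inj: "\<forall>u\<in>set us. inj_on u (dom u)" using us Fpm_inj[OF F] by blast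
  have "pone |` dom t = pprod pone ?vs" using us pprod_inv[OF inj] by (simp add: pprod_append pprod_repl)
  moreover have "length ?vs = 4*n" using us by simp
  moreover have "set ?vs \<subseteq> Fpm F" using us pone_Fpm Fpm_pinv[OF F] by auto
  ultimately show ?thesis unfolding ppow_def by (intro CollectI exI[of _ ?vs]) blast
qed

lemma card_Fpm: fixes F :: "('a \<rightharpoonup> 'a) set" shows "finite F \<Longrightarrow> card (Fpm F) \<le> 2 * card F + 1"
proof -
  assume f: "finite F"
  have "card (Fpm F) \<le> card (F \<union> pinv ` F) + card {pone :: 'a \<rightharpoonup> 'a}" unfolding Fpm_def using card_Un_le[of "F \<union> pinv ` F" "{pone}"] by simp
  also have "\<dots> \<le> card F + card (pinv ` F) + 1" using card_Un_le[of F "pinv ` F"] by simp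
  also have "\<dots> \<le> 2 * card F + 1" using card_image_le[OF f, of pinv] by simp
  finally show ?thesis .
qed

lemma finite_Fpm: "finite F \<Longrightarrow> finite (Fpm F)" by (simp add: Fpm_def)

lemma ppow_img: "ppow G n = (\<lambda>us. pprod pone us) ` {us. set us \<subseteq> G \<and> length us = n}"
  unfolding ppow_def by blast

lemma card_ppow:
  assumes "finite F" shows "finite (ppow (Fpm F) n)" "card (ppow (Fpm F) n) \<le> (2 * card F + 1) ^ n"
proof -
  have fF: "finite (Fpm F)" using finite_Fpm[OF assms] .
  show "finite (ppow (Fpm F) n)" unfolding ppow_img by (rule finite_imageI[OF finite_lists_length_eq[OF fF]])
  have "card (ppow (Fpm F) n) \<le> card {us. set us \<subseteq> Fpm F \<and> length us = n}"
    unfolding ppow_img by (rule card_image_le[OF finite_lists_length_eq[OF fF]])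
  also have "\<dots> = card (Fpm F) ^ n" by (rule card_lists_length_eq[OF fF])
  also have "\<dots> \<le> (2 * card F + 1) ^ n" by (rule power_mono[OF card_Fpm[OF assms]]) simp
  finally show "card (ppow (Fpm F) n) \<le> (2 * card F + 1) ^ n" .
qed

lemma peq_refl: "peq M X X" by (simp add: peq_def)
lemma peq_sym: "peq M X Y \<Longrightarrow> peq M Y X" unfolding peq_def by (auto elim: AE_mp)
lemma peq_trans: "peq M X Y \<Longrightarrow> peq M Y Z \<Longrightarrow> peq M X Z"
  unfolding peq_def by (auto elim: AE_mp)

lemma SigmaP_peq: "pelem M R Y \<Longrightarrow> X \<in> SigmaP M R G \<Longrightarrow> peq M Y X \<Longrightarrow> Y \<in> SigmaP M R G"
  unfolding SigmaP_def using peq_trans by blast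

lemma SigmaP_empty: "pelem M R Map.empty \<Longrightarrow> Map.empty \<in> SigmaP M R G"
  unfolding SigmaP_def by (rule CollectI, rule conjI, assumption, rule exI[of _ "[]"]) (simp add: pw_orth_def psum_def peq_refl)

lemma SigmaP_mono4:
  "X \<in> SigmaP M R (ppow (Fpm F) n) \<Longrightarrow> X \<in> SigmaP M R (ppow (Fpm F) (4*n))"
  unfolding SigmaP_def using ppow_mono4 by blast

lemma psum_pid: "psum (map (\<lambda>t. pone |` dom t) ts) x = (if \<exists>t\<in>set ts. x \<in> dom t then Some x else None)"
proof (cases "\<exists>t\<in>set ts. x \<in> dom t")
  case True
  hence "psum (map (\<lambda>t. pone |` dom t) ts) x \<noteq> None" by (auto simp: psum_None restrict_map_def pone_def)
  then obtain y where y: "psum (map (\<lambda>t. pone |` dom t) ts) x = Some y" by auto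
  then obtain t where "t \<in> set ts" "(pone |` dom t) x = Some y" using psum_Some by fastforce
  hence "y = x" by (auto simp: restrict_map_def pone_def split: if_splits)
  thus ?thesis using y True by simp
next
  case False thus ?thesis by (auto simp: psum_None restrict_map_def)
qed

lemma dom_pid: "dom (pone |` A) = A" by (auto simp: pone_def)
lemma ran_pid: "ran (pone |` A) = A" by (auto simp: pone_def ran_def restrict_map_def)

lemma dom_psum: "x \<in> dom (psum ts) \<longleftrightarrow> (\<exists>t\<in>set ts. x \<in> dom t)"
  using psum_None[of ts x] by auto

lemma SigmaP_pid:
  assumes std: "std_prob_space M" and pc: "pmp_cber M R" and F: "\<forall>t\<in>F. pelem M R t"
    and X: "X \<in> SigmaP M R (ppow (Fpm F) n)"
  shows "pone |` dom X \<in> SigmaP M R (ppow (Fpm F) (4*n))"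
proof -
  obtain ts where pX: "pelem M R X" and ts: "set ts \<subseteq> ppow (Fpm F) n" "pw_orth M ts" "peq M X (psum ts)"
    using X unfolding SigmaP_def by blast
  let ?ts = "map (\<lambda>t. pone |` dom t) ts"
  have "pelem M R (pone |` dom X)" using pelem_pid[OF std pc pelem_dom[OF pX]] .
  moreover have "set ?ts \<subseteq> ppow (Fpm F) (4*n)" using ts(1) ppow_pid[OF F] by auto
  moreover have "pw_orth M ?ts"
    unfolding pw_orth_def
  proof (intro allI impI)
    fix i j assume i: "i < length ?ts" and j: "j < length ?ts" and ij: "i \<noteq> j"
    have e: "?ts ! i = pone |` dom (ts!i)" "?ts ! j = pone |` dom (ts!j)" using i j by simp_all
    have "dom (ts!i) \<inter> dom (ts!j) \<in> null_sets M" using ts(2) i j ij unfolding pw_orth_def orth_def by simp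
    thus "orth M (?ts ! i) (?ts ! j)" unfolding e orth_def dom_pid ran_pid by simp
  qed
  moreover have "peq M (pone |` dom X) (psum ?ts)"
    using ts(3) unfolding peq_def
  proof (rule eventually_mono)
    fix x assume "X x = psum ts x"
    hence "x \<in> dom X \<longleftrightarrow> (\<exists>t\<in>set ts. x \<in> dom t)" using dom_psum by (metis domIff)
    moreover have h1: "psum ?ts x = (if \<exists>t\<in>set ts. x \<in> dom t then Some x else None)" by (rule psum_pid)
    moreover have h2: "(pone |` dom X) x = (if x \<in> dom X then Some x else None)" by (simp add: pone_def)
    ultimately show "(pone |` dom X) x = psum ?ts x" by simp
  qed
  ultimately show ?thesis unfolding SigmaP_def by blast
qed

lemma ddist_card: "d \<ge> 1 \<Longrightarrow> ddist d a b < \<delta> \<Longrightarrow> real (card (bad d a b)) \<le> \<delta> * real d"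
proof -
  assume d: "d \<ge> 1" and h: "ddist d a b < \<delta>"
  have "ddist d a b = real (card (bad d a b)) / real d" by (simp add: ddist_def bad_def)
  hence "real (card (bad d a b)) / real d < \<delta>" using h by simp
  thus ?thesis using d by (simp add: divide_less_eq)
qed

lemma dtr_card:
  assumes d: "d \<ge> 1" and h: "\<bar>dtr d a - \<tau>\<bar> < \<delta>"
  shows "real (card (fixs d a)) \<le> \<tau> * d + \<delta> * d" "real (card (fixs d a)) \<ge> \<tau> * d - \<delta> * d"
proof -
  have e: "dtr d a = real (card (fixs d a)) / real d" by (simp add: dtr_def fixs_def)
  have dp: "real d > 0" using d by simp
  have "real (card (fixs d a)) / real d < \<tau> + \<delta>" "real (card (fixs d a)) / real d > \<tau> - \<delta>" using h e by linarith+
  hence "real (card (fixs d a)) < (\<tau> + \<delta>) * d" "real (card (fixs d a)) > (\<tau> - \<delta>) * d"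
    using dp by (simp_all add: divide_less_eq less_divide_eq)
  thus "real (card (fixs d a)) \<le> \<tau> * d + \<delta> * d" "real (card (fixs d a)) \<ge> \<tau> * d - \<delta> * d"
    by (simp_all add: algebra_simps)
qed

definition nn :: "'a measure \<Rightarrow> 'a set \<Rightarrow> bool" where
  "nn M S \<longleftrightarrow> \<not> (\<exists>N\<in>null_sets M. S \<subseteq> N)"

lemma peq_E:
  assumes "std_prob_space M" "peq M X Y"
  obtains N where "N \<in> null_sets M" "{x. X x \<noteq> Y x} \<subseteq> N"
proof -
  have "AE x in M. X x = Y x" using assms(2) by (simp add: peq_def)
  then obtain N where N: "{x \<in> space M. \<not> X x = Y x} \<subseteq> N" "emeasure M N = 0" "N \<in> sets M" by (rule AE_E)
  have "N \<in> null_sets M" using N by (intro null_setsI)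
  moreover have "{x. X x \<noteq> Y x} \<subseteq> N" using N(1) space_std[OF assms(1)] by auto
  ultimately show ?thesis by (rule that)
qed

lemma card_I:
  assumes std: "std_prob_space M" and pc: "pmp_cber M R" and fF: "finite F"
    and ss: "set ss \<subseteq> SigmaP M R (ppow (Fpm F) n)" and orth: "pw_orth M ss"
  shows "card {i. i < length ss \<and> dom (ss!i) \<notin> null_sets M} \<le> card (ppow (Fpm F) n)"
proof -
  define I where "I = {i. i < length ss \<and> dom (ss!i) \<notin> null_sets M}"
  have ex: "\<forall>i\<in>I. \<exists>g. g \<in> ppow (Fpm F) n \<and> nn M (dom g) \<and> (\<exists>N\<in>null_sets M. dom g \<subseteq> dom (ss!i) \<union> N)"
  proof
    fix i assume i: "i \<in> I"
    have si: "ss!i \<in> SigmaP M R (ppow (Fpm F) n)" using ss i unfolding I_def by auto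
    then obtain ts where pX: "pelem M R (ss!i)" and ts: "set ts \<subseteq> ppow (Fpm F) n" "peq M (ss!i) (psum ts)"
      unfolding SigmaP_def by blast
    obtain N0 where N0: "N0 \<in> null_sets M" "{x. (ss!i) x \<noteq> psum ts x} \<subseteq> N0" using peq_E[OF std ts(2)] by blast
    have "\<exists>g\<in>set ts. nn M (dom g)"
    proof (rule ccontr)
      assume "\<not> (\<exists>g\<in>set ts. nn M (dom g))"
      hence "\<forall>g\<in>set ts. \<exists>N\<in>null_sets M. dom g \<subseteq> N" unfolding nn_def by blast
      then obtain NN where NN: "\<forall>g\<in>set ts. NN g \<in> null_sets M \<and> dom g \<subseteq> NN g" by metis
      have U: "(\<Union>g\<in>set ts. NN g) \<in> null_sets M" using NN by (intro null_sets_UN') (auto intro: countable_finite)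
      have "dom (ss!i) \<subseteq> N0 \<union> (\<Union>g\<in>set ts. NN g)"
      proof
        fix x assume x: "x \<in> dom (ss!i)"
        show "x \<in> N0 \<union> (\<Union>g\<in>set ts. NN g)"
        proof (cases "(ss!i) x = psum ts x")
          case True
          hence "x \<in> dom (psum ts)" using x by (simp add: dom_def)
          then obtain g where "g \<in> set ts" "x \<in> dom g" using dom_psum[of x ts] by blast
          thus ?thesis using NN by blast
        next
          case False thus ?thesis using N0 by blast
        qed
      qed
      hence "dom (ss!i) \<in> null_sets M"
        using null_sets_subset[OF null_sets.Un[OF N0(1) U] pelem_dom[OF pX]] by blast
      thus False using i unfolding I_def by simp
    qed
    then obtain g where g: "g \<in> set ts" "nn M (dom g)" by blast
    have "dom g \<subseteq> dom (ss!i) \<union> N0"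
    proof
      fix x assume "x \<in> dom g"
      hence "x \<in> dom (psum ts)" using g dom_psum[of x ts] by blast
      thus "x \<in> dom (ss!i) \<union> N0" using N0 by (cases "(ss!i) x = psum ts x") (auto simp: dom_def)
    qed
    thus "\<exists>g. g \<in> ppow (Fpm F) n \<and> nn M (dom g) \<and> (\<exists>N\<in>null_sets M. dom g \<subseteq> dom (ss!i) \<union> N)"
      using g ts(1) N0(1) by blast
  qed
  then obtain G where G: "\<forall>i\<in>I. G i \<in> ppow (Fpm F) n \<and> nn M (dom (G i)) \<and> (\<exists>N\<in>null_sets M. dom (G i) \<subseteq> dom (ss!i) \<union> N)"
    by metis
  have inj: "inj_on G I"
  proof (rule inj_onI, rule ccontr)
    fix i j assume i: "i \<in> I" and j: "j \<in> I" and e: "G i = G j" and ij: "i \<noteq> j"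
    obtain Ni where Ni: "Ni \<in> null_sets M" "dom (G i) \<subseteq> dom (ss!i) \<union> Ni" using G i by blast
    obtain Nj where Nj: "Nj \<in> null_sets M" "dom (G i) \<subseteq> dom (ss!j) \<union> Nj" using G j e by metis
    have ij0: "dom (ss!i) \<inter> dom (ss!j) \<in> null_sets M"
      using orth i j ij unfolding pw_orth_def orth_def I_def by blast
    have "dom (G i) \<subseteq> (dom (ss!i) \<inter> dom (ss!j)) \<union> Ni \<union> Nj" using Ni Nj by blast
    moreover have "(dom (ss!i) \<inter> dom (ss!j)) \<union> Ni \<union> Nj \<in> null_sets M"
      using ij0 Ni(1) Nj(1) by (intro null_sets.Un)
    ultimately show False using G i unfolding nn_def by blast
  qed
  have "card I = card (G ` I)" using card_image[OF inj] by simp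
  also have "\<dots> \<le> card (ppow (Fpm F) n)"
    using G by (intro card_mono card_ppow(1)[OF fF]) auto
  finally show ?thesis unfolding I_def .
qed

lemma bad_sym: "bad d a b = bad d b a" unfolding bad_def by auto

lemma measure_null0: "A \<in> null_sets M \<Longrightarrow> measure M A = 0"
  by (simp add: measure_def null_setsD1)

theorem mainTheorem7:
  fixes M :: "'a::polish_space measure" and R :: "('a \<times> 'a) set"
    and F :: "('a \<rightharpoonup> 'a) set" and n d :: nat and \<delta> :: real
    and \<phi> :: "('a \<rightharpoonup> 'a) \<Rightarrow> (nat \<rightharpoonup> nat)"
    and s :: "'a \<rightharpoonup> 'a" and ss :: "('a \<rightharpoonup> 'a) list"
  assumes "std_prob_space M" and "pmp_cber M R"
    and "finite F" and "\<forall>t\<in>F. pelem M R t"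
    and "\<forall>t\<in>F. \<forall>u\<in>F. peq M t u \<longrightarrow> t = u"
    and "n \<ge> 1" and "d \<ge> 1" and "\<delta> > 0"
    and "\<phi> \<in> SA M R F (4 * n) \<delta> d"
    and "s \<in> SigmaP M R (ppow (Fpm F) n)"
    and "set ss \<subseteq> SigmaP M R (ppow (Fpm F) n)"
    and "pw_orth M ss"
    and "peq M s (psum ss)"
  shows "ddist d (\<phi> s)
           (psum (map (\<lambda>i. map_comp (\<phi> (ss ! i)) (dpi d (map \<phi> ss) i)) [0..<length ss]))
         < 150 * (2 * real (card F) + 1) ^ (2 * n) * \<delta>"
proof -
  note std = assms(1) and pc = assms(2) and fF = assms(3) and F = assms(4) and d1 = assms(7)
    and dp = assms(8) and phi = assms(9) and sS = assms(10) and ssS = assms(11) and orth = assms(12)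
    and speq = assms(13)
  interpret prob_space M using std by (simp add: std_prob_space_def)
  define H where "H = SigmaP M R (ppow (Fpm F) (4*n))"
  define k where "k = length ss"
  have phi_pp: "\<And>X. pelem M R X \<Longrightarrow> pperm d (\<phi> X)" using phi unfolding SA_def by blast
  have phi_eq: "\<And>X Y. pelem M R X \<Longrightarrow> pelem M R Y \<Longrightarrow> peq M X Y \<Longrightarrow> \<phi> X = \<phi> Y"
    using phi unfolding SA_def by blast
  have phi_mul: "\<And>X Y. X \<in> H \<Longrightarrow> Y \<in> H \<Longrightarrow> X \<circ>\<^sub>m Y \<in> H \<Longrightarrow>
      real (card (bad d (\<phi> (X \<circ>\<^sub>m Y)) (\<phi> X \<circ>\<^sub>m \<phi> Y))) \<le> \<delta> * d"
  proof -
    fix X Y assume "X \<in> H" "Y \<in> H" "X \<circ>\<^sub>m Y \<in> H"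
    hence "ddist d (\<phi> (X \<circ>\<^sub>m Y)) (\<phi> X \<circ>\<^sub>m \<phi> Y) < \<delta>" using phi unfolding SA_def H_def by blast
    thus "real (card (bad d (\<phi> (X \<circ>\<^sub>m Y)) (\<phi> X \<circ>\<^sub>m \<phi> Y))) \<le> \<delta> * d" by (rule ddist_card[OF d1])
  qed
  have phi_tr: "\<And>X. X \<in> H \<Longrightarrow> \<bar>dtr d (\<phi> X) - ptau M X\<bar> < \<delta>"
    using phi unfolding SA_def H_def by blast
  have Hpel: "\<And>X. X \<in> H \<Longrightarrow> pelem M R X" unfolding H_def SigmaP_def by blast
  have sH: "s \<in> H" unfolding H_def by (rule SigmaP_mono4[OF sS])
  have siS: "\<And>i. i < k \<Longrightarrow> ss!i \<in> SigmaP M R (ppow (Fpm F) n)" using ssS unfolding k_def by auto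
  have siH: "\<And>i. i < k \<Longrightarrow> ss!i \<in> H" unfolding H_def using siS SigmaP_mono4 by blast
  have pel_s: "pelem M R s" using Hpel[OF sH] .
  have pel_si: "\<And>i. i < k \<Longrightarrow> pelem M R (ss!i)" using Hpel siH by blast
  have sets_si: "\<And>i. i < k \<Longrightarrow> dom (ss!i) \<in> sets M" using pel_si pelem_dom by blast
  have sets_s: "dom s \<in> sets M" using pelem_dom[OF pel_s] .
  define p where "p = (\<lambda>i. pone |` dom (ss!i))"
  define Ps where "Ps = pone |` dom s"
  have pH: "\<And>i. i < k \<Longrightarrow> p i \<in> H" unfolding p_def H_def using SigmaP_pid[OF std pc F siS] by blast
  have PsH: "Ps \<in> H" unfolding Ps_def H_def using SigmaP_pid[OF std pc F sS] .
  have pel_e: "pelem M R Map.empty" by (rule pelem_empty[OF std pc])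
  have eH: "Map.empty \<in> H" unfolding H_def by (rule SigmaP_empty[OF pel_e])
  define z where "z = \<phi> Map.empty"
  define E where "E = \<phi> Ps"
  define e where "e = (\<lambda>i. \<phi> (p i))"
  define a where "a = \<phi> s"
  define ts where "ts = map \<phi> ss"
  define I where "I = {i. i < k \<and> dom (ss!i) \<notin> null_sets M}"
  define c where "c = \<delta> * real d"
  have lts: "length ts = k" unfolding ts_def k_def by simp
  have tsi: "\<And>i. i < k \<Longrightarrow> ts!i = \<phi> (ss!i)" unfolding ts_def k_def by simp
  have Ik: "I \<subseteq> {..<length ts}" unfolding I_def lts by auto
  have AEs: "AE x in M. s x = psum ss x" using speq by (simp add: peq_def)
  have finpairs: "finite {(i,j). i < k \<and> j < k \<and> i \<noteq> j}"
    by (rule finite_subset[of _ "{..<k} \<times> {..<k}"]) auto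
  have AEd: "AE x in M. \<forall>q\<in>{(i,j). i < k \<and> j < k \<and> i \<noteq> j}. x \<notin> dom (ss!fst q) \<inter> dom (ss!snd q)"
  proof (rule AE_finite_allI[OF finpairs])
    fix q assume "q \<in> {(i,j). i < k \<and> j < k \<and> i \<noteq> j}"
    hence "dom (ss!fst q) \<inter> dom (ss!snd q) \<in> null_sets M"
      using orth unfolding pw_orth_def orth_def k_def by auto
    thus "AE x in M. x \<notin> dom (ss!fst q) \<inter> dom (ss!snd q)" by (rule AE_not_in)
  qed
  have psum_i: "\<And>x i. i < k \<Longrightarrow> x \<in> dom (ss!i) \<Longrightarrow> (\<forall>j<k. j \<noteq> i \<longrightarrow> x \<notin> dom (ss!j)) \<Longrightarrow> psum ss x = (ss!i) x"
  proof -
    fix x i assume i: "i < k" and x: "x \<in> dom (ss!i)" and o: "\<forall>j<k. j \<noteq> i \<longrightarrow> x \<notin> dom (ss!j)"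
    show "psum ss x = (ss!i) x" using i o unfolding k_def by (intro psum_unique) (auto simp: domIff)
  qed
  have H1: "\<forall>i\<in>I. real (card (bad d (ts!i) (a \<circ>\<^sub>m e i))) \<le> c"
  proof
    fix i assume iI: "i \<in> I"
    hence i: "i < k" unfolding I_def by simp
    have eq1: "s \<circ>\<^sub>m p i = s |` dom (ss!i)" unfolding p_def by (rule comp_restr_pone)
    have pq1: "peq M (s |` dom (ss!i)) (ss!i)"
      unfolding peq_def
    proof (rule eventually_mono[OF eventually_conj[OF AEs AEd]])
      fix x assume h: "s x = psum ss x \<and> (\<forall>q\<in>{(i,j). i < k \<and> j < k \<and> i \<noteq> j}. x \<notin> dom (ss!fst q) \<inter> dom (ss!snd q))"
      show "(s |` dom (ss!i)) x = (ss!i) x"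
      proof (cases "x \<in> dom (ss!i)")
        case True
        have "\<forall>j<k. j \<noteq> i \<longrightarrow> x \<notin> dom (ss!j)"
        proof (intro allI impI)
          fix j assume "j < k" "j \<noteq> i"
          hence "(i,j) \<in> {(i,j). i < k \<and> j < k \<and> i \<noteq> j}" using i by auto
          thus "x \<notin> dom (ss!j)" using h True by fastforce
        qed
        hence "psum ss x = (ss!i) x" using psum_i[OF i True] by blast
        thus ?thesis using h True by simp
      next
        case False thus ?thesis by (simp add: domIff)
      qed
    qed
    moreover have pr: "pelem M R (s |` dom (ss!i))" by (rule pelem_restr[OF std pc pel_s sets_si[OF i]])
    ultimately have "\<phi> (s |` dom (ss!i)) = \<phi> (ss!i)" using phi_eq pel_si[OF i] by blast
    moreover have "s |` dom (ss!i) \<in> H" unfolding H_def by (rule SigmaP_peq[OF pr siH[OF i, unfolded H_def] pq1])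
    ultimately show "real (card (bad d (ts!i) (a \<circ>\<^sub>m e i))) \<le> c"
      using phi_mul[OF sH pH[OF i]] eq1 unfolding a_def e_def c_def tsi[OF i] by simp
  qed
  have H2: "\<forall>i\<in>I. real (card (bad d (e i) (e i \<circ>\<^sub>m e i))) \<le> c"
  proof
    fix i assume "i \<in> I" hence i: "i < k" unfolding I_def by simp
    have "p i \<circ>\<^sub>m p i = p i" unfolding p_def restr_pone_comp by simp
    thus "real (card (bad d (e i) (e i \<circ>\<^sub>m e i))) \<le> c"
      using phi_mul[OF pH[OF i] pH[OF i]] pH[OF i] unfolding e_def c_def by simp
  qed
  have H3: "\<forall>i\<in>I. real (card (bad d (ts!i) (ts!i \<circ>\<^sub>m e i))) \<le> c"
  proof
    fix i assume "i \<in> I" hence i: "i < k" unfolding I_def by simp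
    have "ss!i \<circ>\<^sub>m p i = ss!i" unfolding p_def comp_restr_pone restr_dom_self ..
    thus "real (card (bad d (ts!i) (ts!i \<circ>\<^sub>m e i))) \<le> c"
      using phi_mul[OF siH[OF i] pH[OF i]] siH[OF i] unfolding e_def c_def tsi[OF i] by simp
  qed
  have H6: "\<forall>i\<in>I. \<forall>j\<in>I. i \<noteq> j \<longrightarrow> real (card (bad d (e i \<circ>\<^sub>m e j) z)) \<le> c"
  proof (intro ballI impI)
    fix i j assume "i \<in> I" "j \<in> I" and ij: "i \<noteq> j"
    hence i: "i < k" and j: "j < k" unfolding I_def by auto
    have eq: "p i \<circ>\<^sub>m p j = pone |` (dom (ss!i) \<inter> dom (ss!j))" unfolding p_def by (rule restr_pone_comp)
    have nul: "dom (ss!i) \<inter> dom (ss!j) \<in> null_sets M" using orth i j ij unfolding pw_orth_def orth_def k_def by auto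
    have pq: "peq M (pone |` (dom (ss!i) \<inter> dom (ss!j))) Map.empty"
      unfolding peq_def by (rule eventually_mono[OF AE_not_in[OF nul]]) (auto simp: restrict_map_def)
    have pl: "pelem M R (pone |` (dom (ss!i) \<inter> dom (ss!j)))"
      using pelem_pid[OF std pc] sets_si[OF i] sets_si[OF j] by blast
    have "\<phi> (p i \<circ>\<^sub>m p j) = z" unfolding eq z_def using phi_eq[OF pl pel_e pq] .
    moreover have "p i \<circ>\<^sub>m p j \<in> H" unfolding eq H_def by (rule SigmaP_peq[OF pl eH[unfolded H_def] pq])
    ultimately show "real (card (bad d (e i \<circ>\<^sub>m e j) z)) \<le> c"
      using phi_mul[OF pH[OF i] pH[OF j]] unfolding e_def c_def by (simp add: bad_sym)
  qed
  have ee: "(Map.empty \<circ>\<^sub>m Map.empty) = (Map.empty :: 'a \<rightharpoonup> 'a)" by (rule ext) simp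
  have H7a: "real (card (bad d z (z \<circ>\<^sub>m z))) \<le> c"
    using phi_mul[OF eH eH] eH unfolding ee z_def c_def by simp
  have H7b: "real (card (fixs d z)) \<le> c"
    using dtr_card(1)[OF d1 phi_tr[OF eH]] unfolding z_def c_def ptau_empty by simp
  have "s \<circ>\<^sub>m Ps = s" unfolding Ps_def comp_restr_pone restr_dom_self ..
  hence H8a: "real (card (bad d a (a \<circ>\<^sub>m E))) \<le> c"
    using phi_mul[OF sH PsH] sH unfolding a_def E_def c_def by simp
  have "Ps \<circ>\<^sub>m Ps = Ps" unfolding Ps_def restr_pone_comp by simp
  hence H8b: "real (card (bad d E (E \<circ>\<^sub>m E))) \<le> c"
    using phi_mul[OF PsH PsH] PsH unfolding E_def c_def by simp
  have H8c: "real (card (fixs d E)) \<le> measure M (dom s) * d + c"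
    using dtr_card(1)[OF d1 phi_tr[OF PsH]] unfolding E_def c_def Ps_def ptau_pid by simp
  have H9: "\<forall>i\<in>I. real (card (bad d (e i) (E \<circ>\<^sub>m e i))) \<le> c \<and> real (card (fixs d (e i))) \<ge> measure M (dom (ss!i)) * d - c"
  proof
    fix i assume "i \<in> I" hence i: "i < k" unfolding I_def by simp
    have eq: "Ps \<circ>\<^sub>m p i = pone |` (dom s \<inter> dom (ss!i))" unfolding Ps_def p_def by (rule restr_pone_comp)
    have pq: "peq M (pone |` (dom s \<inter> dom (ss!i))) (p i)"
      unfolding peq_def p_def
    proof (rule eventually_mono[OF AEs])
      fix x assume h: "s x = psum ss x"
      have "x \<in> dom (ss!i) \<Longrightarrow> x \<in> dom s"
      proof -
        assume "x \<in> dom (ss!i)"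
        hence "x \<in> dom (psum ss)" using dom_psum[of x ss] nth_mem i unfolding k_def by blast
        thus "x \<in> dom s" using h by (simp add: dom_def)
      qed
      thus "(pone |` (dom s \<inter> dom (ss!i))) x = (pone |` dom (ss!i)) x" by (auto simp: restrict_map_def)
    qed
    have pl: "pelem M R (pone |` (dom s \<inter> dom (ss!i)))"
      using pelem_pid[OF std pc] sets_s sets_si[OF i] by blast
    have "\<phi> (Ps \<circ>\<^sub>m p i) = e i" unfolding eq e_def using phi_eq[OF pl Hpel[OF pH[OF i]] pq] .
    moreover have "Ps \<circ>\<^sub>m p i \<in> H" unfolding eq H_def by (rule SigmaP_peq[OF pl pH[OF i, unfolded H_def] pq])
    ultimately have "real (card (bad d (e i) (E \<circ>\<^sub>m e i))) \<le> c"
      using phi_mul[OF PsH pH[OF i]] unfolding E_def e_def c_def by simp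
    moreover have "real (card (fixs d (e i))) \<ge> measure M (dom (ss!i)) * d - c"
      using dtr_card(2)[OF d1 phi_tr[OF pH[OF i]]] unfolding e_def c_def p_def ptau_pid by simp
    ultimately show "real (card (bad d (e i) (E \<circ>\<^sub>m e i))) \<le> c \<and> real (card (fixs d (e i))) \<ge> measure M (dom (ss!i)) * d - c" ..
  qed
  have H10: "measure M (dom s) \<le> (\<Sum>i\<in>I. measure M (dom (ss!i)))"
  proof -
    have U: "(\<Union>i\<in>{..<k}. dom (ss!i)) \<in> sets M" using sets_si by (intro sets.finite_UN) auto
    have "measure M (dom s) = measure M (\<Union>i\<in>{..<k}. dom (ss!i))"
    proof (rule measure_eq_AE[OF _ sets_s U])
      show "AE x in M. (x \<in> dom s) = (x \<in> (\<Union>i\<in>{..<k}. dom (ss!i)))"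
      proof (rule eventually_mono[OF AEs])
        fix x assume h: "s x = psum ss x"
        have "x \<in> dom s \<longleftrightarrow> x \<in> dom (psum ss)" using h by (simp add: dom_def)
        also have "\<dots> \<longleftrightarrow> (\<exists>t\<in>set ss. x \<in> dom t)" by (rule dom_psum)
        also have "\<dots> \<longleftrightarrow> x \<in> (\<Union>i\<in>{..<k}. dom (ss!i))" unfolding k_def
        proof
          assume "\<exists>t\<in>set ss. x \<in> dom t"
          then obtain t where "t \<in> set ss" "x \<in> dom t" by blast
          then obtain i where "i < length ss" "ss!i = t" by (auto simp: in_set_conv_nth)
          thus "x \<in> (\<Union>i\<in>{..<length ss}. dom (ss!i))" using `x \<in> dom t` by blast
        next
          assume "x \<in> (\<Union>i\<in>{..<length ss}. dom (ss!i))"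
          then obtain i where "i < length ss" "x \<in> dom (ss!i)" by blast
          thus "\<exists>t\<in>set ss. x \<in> dom t" using nth_mem by blast
        qed
        finally show "(x \<in> dom s) = (x \<in> (\<Union>i\<in>{..<k}. dom (ss!i)))" .
      qed
    qed
    also have "\<dots> \<le> (\<Sum>i\<in>{..<k}. measure M (dom (ss!i)))"
      using sets_si by (intro finite_measure_subadditive_finite) auto
    also have "\<dots> = (\<Sum>i\<in>I. measure M (dom (ss!i)))"
    proof (rule sum.mono_neutral_right)
      show "finite {..<k}" by simp
      show "I \<subseteq> {..<k}" unfolding I_def by auto
      show "\<forall>i\<in>{..<k} - I. measure M (dom (ss!i)) = 0"
        unfolding I_def by (auto intro: measure_null0)
    qed
    finally show ?thesis .
  qed
  have H11: "\<forall>i<length ts. i \<notin> I \<longrightarrow> ts!i = z"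
  proof (intro allI impI)
    fix i assume i: "i < length ts" and nI: "i \<notin> I"
    hence ik: "i < k" using lts by simp
    hence nul: "dom (ss!i) \<in> null_sets M" using nI unfolding I_def by simp
    have "peq M (ss!i) Map.empty"
      unfolding peq_def by (rule eventually_mono[OF AE_not_in[OF nul]]) (simp add: domIff)
    thus "ts!i = z" unfolding tsi[OF ik] z_def using phi_eq pel_si[OF ik] pel_e by blast
  qed
  have ppt: "\<forall>j<length ts. pperm d (ts!j)" using tsi phi_pp pel_si lts by auto
  have ppa: "pperm d a" unfolding a_def using phi_pp[OF pel_s] .
  have ppz: "pperm d z" unfolding z_def using phi_pp[OF pel_e] .
  have ppE: "pperm d E" unfolding E_def using phi_pp[OF Hpel[OF PsH]] .
  have ppe: "\<forall>i\<in>I. pperm d (e i)" unfolding e_def I_def using phi_pp Hpel pH by auto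
  have main: "real (card (bad d a (psum (map (\<lambda>i. ts!i \<circ>\<^sub>m dpi d ts i) [0..<length ts])))) \<le> 17 * (real (card I) + 1)^2 * c"
    by (rule comb[OF ppt ppa ppz ppE ppe Ik H1 H2 H3 H6 H7a H7b H8a H8b H8c H9 H10 H11])
  have Teq: "psum (map (\<lambda>i. ts!i \<circ>\<^sub>m dpi d ts i) [0..<length ts]) =
             psum (map (\<lambda>i. map_comp (\<phi> (ss ! i)) (dpi d (map \<phi> ss) i)) [0..<length ss])"
  proof -
    have "map (\<lambda>i. ts!i \<circ>\<^sub>m dpi d ts i) [0..<length ts] = map (\<lambda>i. map_comp (\<phi> (ss ! i)) (dpi d (map \<phi> ss) i)) [0..<length ss]"
      unfolding lts by (rule map_cong) (auto simp: tsi k_def ts_def)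
    thus ?thesis by simp
  qed
  define B where "B = (2 * card F + 1) ^ n"
  have cI: "card I \<le> B" unfolding B_def I_def k_def
    using card_I[OF std pc fF ssS orth] card_ppow(2)[OF fF, of n] by linarith
  have B1: "B \<ge> 1" unfolding B_def by simp
  have "(real (card I) + 1)^2 \<le> (2 * real B)^2"
    using cI B1 by (intro power_mono) auto
  hence cB: "(real (card I) + 1)^2 \<le> 4 * (real B)^2" by (simp add: power_mult_distrib)
  have Bpow: "(2 * real (card F) + 1) ^ (2 * n) = (real B)^2" unfolding B_def
    by (simp add: power_mult[symmetric] mult.commute add.commute)
  have c0: "c \<ge> 0" unfolding c_def using dp by simp
  have "real (card (bad d (\<phi> s) (psum (map (\<lambda>i. map_comp (\<phi> (ss ! i)) (dpi d (map \<phi> ss) i)) [0..<length ss])))) \<le> 17 * (4 * (real B)^2) * c"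
    using main Teq cB c0 unfolding a_def by (smt (verit) mult_left_mono mult_right_mono)
  hence "ddist d (\<phi> s) (psum (map (\<lambda>i. map_comp (\<phi> (ss ! i)) (dpi d (map \<phi> ss) i)) [0..<length ss])) \<le> 68 * (real B)^2 * \<delta>"
    using d1 unfolding c_def by (simp add: ddist_def bad_def divide_le_eq algebra_simps)
  also have "\<dots> < 150 * (real B)^2 * \<delta>" using B1 dp by simp
  finally show ?thesis unfolding Bpow .
qed

end
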